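(* Let $(H,\sigma)$ be a coquasitriangular Hopf algebra, $X,A\subseteq H$ sub-Hopf algebras, $H_{X,A}=H_{l_X}H_{r_A}\subseteq H^0$, and consider the generalized quantum double $D(H_{X,A}^{\rm cop},X)$ with respect to the evaluation pairing $\langle\varphi,y\rangle=\varphi(y)$ ($\varphi\in H_{X,A}$, $y\in X$). Then the map $\pi:D(H_{X,A}^{\rm cop},X)\to H_{X,A}^{\rm cop}$, $\pi(l_xr_a\otimes y)=l_xr_a\,l_{S^{-1}(y)}$ ($x,y\in X$, $a\in A$), is a Hopf algebra morphism with $\pi\circ i={\rm Id}$, where $i(\varphi)=\varphi\otimes 1$.
   Context: Sweedler notation. A CQT Hopf algebra $(H,\sigma)$ has a convolution invertible bilinear $\sigma:H\otimes H\to k$ with $\sigma(hh',g)=\sigma(h,g_1)\sigma(h',g_2)$, $\sigma(g,hh')=\sigma(g_2,h)\sigma(g_1,h')$, $\sigma(1,h)=\sigma(h,1)=\varepsilon(h)$, $\sigma(h_1,h'_1)h_2h'_2=h'_1h_1\sigma(h_2,h'_2)$; its antipode $S$ is bijective. In the finite dual $H^0$: $l_x=\sigma(-,x)$, $r_a=\sigma(a,-)$, $H_{l_X}=\{l_x\mid x\in X\}$, $H_{r_A}=\{r_a\mid a\in A\}$, and $H_{X,A}=H_{l_X}H_{r_A}=H_{r_A}H_{l_X}$ is a sub-Hopf algebra of $H^0$ (with $l_{xy}=l_yl_x$, $\Delta(l_x)=l_{x_1}\otimes l_{x_2}$, $S(l_x)=l_{S^{-1}(x)}$, $r_{ab}=r_ar_b$,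 $\Delta(r_a)=r_{a_2}\otimes r_{a_1}$, $S(r_a)=r_{S^{-1}(a)}$). For Hopf algebras $U,V$ with bijective antipodes and a pairing $\langle\,,\rangle$, $D(U^{\rm cop},V)$ is the Hopf algebra on $U\otimes V$ with unit $1\otimes1$, multiplication $(m\otimes x)(n\otimes y)=\langle n_3,x_1\rangle\langle S_U^{-1}(n_1),x_3\rangle mn_2\otimes x_2y$ and comultiplication $\Delta(m\otimes x)=(m_2\otimes x_1)\otimes(m_1\otimes x_2)$ (subscripts in $U$, $V$); here $U=H_{X,A}$, $V=X$. *)

theory Defs
  imports Main
begin

text \<open>Elements of tensor products
are represented by finite lists of pure tensors (pairs/triples); two such lists denote
the same tensor iff all multilinear forms into k agree on them (valid over a field).
The comultiplication is given as a function Delta returning a representative list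
(Sweedler notation: h1 (x) h2 ranges over Delta h). Elements of the finite dual H^0 are
functions 'h => 'k; an element of H^0 (x) H^0 is determined by its values on a (x) b.\<close>

definition lin :: "('k::field \<Rightarrow> 'h::ab_group_add \<Rightarrow> 'h) \<Rightarrow> ('h \<Rightarrow> 'k) \<Rightarrow> bool" where
  "lin sc f \<longleftrightarrow> (\<forall>a b. f (a + b) = f a + f b) \<and> (\<forall>c a. f (sc c a) = c * f a)"

definition linH :: "('k::field \<Rightarrow> 'h::ab_group_add \<Rightarrow> 'h) \<Rightarrow> ('h \<Rightarrow> 'h) \<Rightarrow> bool" where
  "linH sc f \<longleftrightarrow> (\<forall>a b. f (a + b) = f a + f b) \<and> (\<forall>c a. f (sc c a) = sc c (f a))"

definition bil :: "('k::field \<Rightarrow> 'h::ab_group_add \<Rightarrow> 'h) \<Rightarrow> ('h \<Rightarrow> 'h \<Rightarrow> 'k) \<Rightarrow> bool" where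
  "bil sc f \<longleftrightarrow> (\<forall>b. lin sc (\<lambda>a. f a b)) \<and> (\<forall>a. lin sc (f a))"

definition tril :: "('k::field \<Rightarrow> 'h::ab_group_add \<Rightarrow> 'h) \<Rightarrow> ('h \<Rightarrow> 'h \<Rightarrow> 'h \<Rightarrow> 'k) \<Rightarrow> bool" where
  "tril sc f \<longleftrightarrow> (\<forall>b c. lin sc (\<lambda>a. f a b c)) \<and> (\<forall>a c. lin sc (\<lambda>b. f a b c))
                 \<and> (\<forall>a b. lin sc (f a b))"

definition teq2 :: "('k::field \<Rightarrow> 'h::ab_group_add \<Rightarrow> 'h) \<Rightarrow> ('h \<times> 'h) list \<Rightarrow> ('h \<times> 'h) list \<Rightarrow> bool" where
  "teq2 sc L M \<longleftrightarrow> (\<forall>f. bil sc f \<longrightarrow>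
      sum_list (map (\<lambda>(a,b). f a b) L) = sum_list (map (\<lambda>(a,b). f a b) M))"

definition teq3 :: "('k::field \<Rightarrow> 'h::ab_group_add \<Rightarrow> 'h) \<Rightarrow> ('h \<times> 'h \<times> 'h) list \<Rightarrow> ('h \<times> 'h \<times> 'h) list \<Rightarrow> bool" where
  "teq3 sc L M \<longleftrightarrow> (\<forall>f. tril sc f \<longrightarrow>
      sum_list (map (\<lambda>(a,b,c). f a b c) L) = sum_list (map (\<lambda>(a,b,c). f a b c) M))"

definition hopf_algebra ::
  "('k::field \<Rightarrow> 'h::ab_group_add \<Rightarrow> 'h) \<Rightarrow> ('h \<Rightarrow> 'h \<Rightarrow> 'h) \<Rightarrow> 'h \<Rightarrow> ('h \<Rightarrow> ('h \<times> 'h) list)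
    \<Rightarrow> ('h \<Rightarrow> 'k) \<Rightarrow> ('h \<Rightarrow> 'h) \<Rightarrow> bool" where
  "hopf_algebra sc mult one Delta eps S \<longleftrightarrow>
     \<comment> \<open>vector space\<close>
     (\<forall>a b c. sc a (b + c) = sc a b + sc a c) \<and>
     (\<forall>a b x. sc (a + b) x = sc a x + sc b x) \<and>
     (\<forall>a b x. sc a (sc b x) = sc (a * b) x) \<and>
     (\<forall>x. sc 1 x = x) \<and>
     \<comment> \<open>associative unital algebra, bilinear multiplication\<close>
     (\<forall>a b c. mult (a + b) c = mult a c + mult b c) \<and>
     (\<forall>a b c. mult a (b + c) = mult a b + mult a c) \<and>
     (\<forall>k a b. mult (sc k a) b = sc k (mult a b)) \<and>
     (\<forall>k a b. mult a (sc k b) = sc k (mult a b)) \<and>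
     (\<forall>a b c. mult (mult a b) c = mult a (mult b c)) \<and>
     (\<forall>a. mult one a = a \<and> mult a one = a) \<and>
     \<comment> \<open>linear, coassociative, counital comultiplication\<close>
     (\<forall>a b. teq2 sc (Delta (a + b)) (Delta a @ Delta b)) \<and>
     (\<forall>k a. teq2 sc (Delta (sc k a)) (map (\<lambda>(p,q). (sc k p, q)) (Delta a))) \<and>
     (\<forall>h. teq3 sc [(p1, p2, q). (p,q) \<leftarrow> Delta h, (p1,p2) \<leftarrow> Delta p]
                  [(p, q1, q2). (p,q) \<leftarrow> Delta h, (q1,q2) \<leftarrow> Delta q]) \<and>
     lin sc eps \<and>
     (\<forall>h. sum_list (map (\<lambda>(p,q). sc (eps p) q) (Delta h)) = h) \<and>
     (\<forall>h. sum_list (map (\<lambda>(p,q). sc (eps q) p) (Delta h)) = h) \<and>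
     \<comment> \<open>bialgebra compatibility\<close>
     (\<forall>a b. teq2 sc (Delta (mult a b))
                [(mult a1 b1, mult a2 b2). (a1,a2) \<leftarrow> Delta a, (b1,b2) \<leftarrow> Delta b]) \<and>
     teq2 sc (Delta one) [(one, one)] \<and>
     (\<forall>a b. eps (mult a b) = eps a * eps b) \<and> eps one = 1 \<and>
     \<comment> \<open>antipode, assumed bijective\<close>
     linH sc S \<and>
     (\<forall>h. sum_list (map (\<lambda>(p,q). mult (S p) q) (Delta h)) = sc (eps h) one) \<and>
     (\<forall>h. sum_list (map (\<lambda>(p,q). mult p (S q)) (Delta h)) = sc (eps h) one) \<and>
     bij S"

definition cqt ::
  "('k::field \<Rightarrow> 'h::ab_group_add \<Rightarrow> 'h) \<Rightarrow> ('h \<Rightarrow> 'h \<Rightarrow> 'h) \<Rightarrow> 'h \<Rightarrow> ('h \<Rightarrow> ('h \<times> 'h) list)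
    \<Rightarrow> ('h \<Rightarrow> 'k) \<Rightarrow> ('h \<Rightarrow> 'h \<Rightarrow> 'k) \<Rightarrow> bool" where
  "cqt sc mult one Delta eps \<sigma> \<longleftrightarrow>
     bil sc \<sigma> \<and>
     (\<exists>\<tau>. bil sc \<tau> \<and>
        (\<forall>h g. sum_list [\<sigma> h1 g1 * \<tau> h2 g2. (h1,h2) \<leftarrow> Delta h, (g1,g2) \<leftarrow> Delta g] = eps h * eps g) \<and>
        (\<forall>h g. sum_list [\<tau> h1 g1 * \<sigma> h2 g2. (h1,h2) \<leftarrow> Delta h, (g1,g2) \<leftarrow> Delta g] = eps h * eps g)) \<and>
     (\<forall>h h' g. \<sigma> (mult h h') g = sum_list [\<sigma> h g1 * \<sigma> h' g2. (g1,g2) \<leftarrow> Delta g]) \<and>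
     (\<forall>g h h'. \<sigma> g (mult h h') = sum_list [\<sigma> g2 h * \<sigma> g1 h'. (g1,g2) \<leftarrow> Delta g]) \<and>
     (\<forall>h. \<sigma> one h = eps h \<and> \<sigma> h one = eps h) \<and>
     (\<forall>h h'. sum_list [sc (\<sigma> h1 h1') (mult h2 h2'). (h1,h2) \<leftarrow> Delta h, (h1',h2') \<leftarrow> Delta h']
           = sum_list [sc (\<sigma> h2 h2') (mult h1' h1). (h1,h2) \<leftarrow> Delta h, (h1',h2') \<leftarrow> Delta h'])"

text \<open>Sub-Hopf algebra X of H (closed under S and S^{-1}, i.e. S(X) = X).\<close>
definition sub_hopf ::
  "('k::field \<Rightarrow> 'h::ab_group_add \<Rightarrow> 'h) \<Rightarrow> ('h \<Rightarrow> 'h \<Rightarrow> 'h) \<Rightarrow> 'h \<Rightarrow> ('h \<Rightarrow> ('h \<times> 'h) list)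
    \<Rightarrow> ('h \<Rightarrow> 'h) \<Rightarrow> 'h set \<Rightarrow> bool" where
  "sub_hopf sc mult one Delta S X \<longleftrightarrow>
     0 \<in> X \<and> (\<forall>a\<in>X. \<forall>b\<in>X. a + b \<in> X) \<and> (\<forall>c. \<forall>a\<in>X. sc c a \<in> X) \<and>
     one \<in> X \<and> (\<forall>a\<in>X. \<forall>b\<in>X. mult a b \<in> X) \<and>
     (\<forall>x\<in>X. \<exists>L. set L \<subseteq> X \<times> X \<and> teq2 sc L (Delta x)) \<and>
     S ` X = X"

definition conv :: "('h \<Rightarrow> ('h \<times> 'h) list) \<Rightarrow> ('h \<Rightarrow> 'k::field) \<Rightarrow> ('h \<Rightarrow> 'k) \<Rightarrow> 'h \<Rightarrow> 'k" where
  "conv Delta f g h = sum_list [f p * g q. (p,q) \<leftarrow> Delta h]"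

definition lfun :: "('h \<Rightarrow> 'h \<Rightarrow> 'k) \<Rightarrow> 'h \<Rightarrow> 'h \<Rightarrow> 'k" where
  "lfun \<sigma> x = (\<lambda>h. \<sigma> h x)"

definition rfun :: "('h \<Rightarrow> 'h \<Rightarrow> 'k) \<Rightarrow> 'h \<Rightarrow> 'h \<Rightarrow> 'k" where
  "rfun \<sigma> a = (\<lambda>h. \<sigma> a h)"

text \<open>H_{X,A} = H_{l_X} H_{r_A}: the linear span of the products l_x r_a in H^0.\<close>
definition HXA :: "('h \<Rightarrow> ('h \<times> 'h) list) \<Rightarrow> ('h \<Rightarrow> 'h \<Rightarrow> 'k::field) \<Rightarrow> 'h set \<Rightarrow> 'h set \<Rightarrow> ('h \<Rightarrow> 'k) set" where
  "HXA Delta \<sigma> X A = {f. \<exists>L :: ('k \<times> 'h \<times> 'h) list. (\<forall>(c,x,a)\<in>set L. x \<in> X \<and> a \<in> A) \<and>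
      f = (\<lambda>h. sum_list [c * conv Delta (lfun \<sigma> x) (rfun \<sigma> a) h. (c,x,a) \<leftarrow> L])}"

text \<open>Comultiplication of H^0 restricted to U: a representative of Delta(f) in U (x) U,
  characterised by f1(a) f2(b) = f(ab).\<close>
definition DeltaU :: "('h \<Rightarrow> 'h \<Rightarrow> 'h) \<Rightarrow> ('h \<Rightarrow> 'k::field) set \<Rightarrow> ('h \<Rightarrow> 'k)
     \<Rightarrow> (('h \<Rightarrow> 'k) \<times> ('h \<Rightarrow> 'k)) list" where
  "DeltaU mult U f = (SOME L. set L \<subseteq> U \<times> U \<and>
      (\<forall>a b. sum_list [g a * g' b. (g,g') \<leftarrow> L] = f (mult a b)))"

definition evq :: "(('h \<Rightarrow> 'k::field) \<times> ('h \<Rightarrow> 'k)) list \<Rightarrow> (('h \<Rightarrow> 'k) \<times> ('h \<Rightarrow> 'k)) list \<Rightarrow> bool" where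
  "evq L M \<longleftrightarrow> (\<forall>a b. sum_list [g a * g' b. (g,g') \<leftarrow> L] = sum_list [g a * g' b. (g,g') \<leftarrow> M])"

text \<open>Multiplication of the generalized quantum double D(U^cop, X) with evaluation pairing:
 (m (x) x)(n (x) y) = <n3,x1> <S_U^{-1}(n1),x3> m n2 (x) x2 y, with S_U^{-1}(n1) = n1 o S^{-1}.\<close>
definition multD ::
  "('h \<Rightarrow> 'h \<Rightarrow> 'h) \<Rightarrow> ('h \<Rightarrow> ('h \<times> 'h) list) \<Rightarrow> ('h \<Rightarrow> 'h) \<Rightarrow> ('h \<Rightarrow> 'k::field) set
    \<Rightarrow> (('h \<Rightarrow> 'k) \<times> 'h) list \<Rightarrow> (('h \<Rightarrow> 'k) \<times> 'h) list \<Rightarrow> (('h \<Rightarrow> 'k) \<times> 'h) list" where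
  "multD mult Delta S U d d' =
     [ ((\<lambda>h. (n3 x1 * n1 (inv S x3)) * conv Delta m n2 h), mult x2 y).
        (m,x) \<leftarrow> d, (n,y) \<leftarrow> d', (p,n3) \<leftarrow> DeltaU mult U n, (n1,n2) \<leftarrow> DeltaU mult U p,
        (x1,q) \<leftarrow> Delta x, (x2,x3) \<leftarrow> Delta q ]"

text \<open>Comultiplication of D(U^cop, X): Delta(m (x) x) = (m2 (x) x1) (x) (m1 (x) x2).\<close>
definition comultD ::
  "('h \<Rightarrow> 'h \<Rightarrow> 'h) \<Rightarrow> ('h \<Rightarrow> ('h \<times> 'h) list) \<Rightarrow> ('h \<Rightarrow> 'k::field) set
    \<Rightarrow> (('h \<Rightarrow> 'k) \<times> 'h) list \<Rightarrow> ((('h \<Rightarrow> 'k) \<times> 'h) \<times> (('h \<Rightarrow> 'k) \<times> 'h)) list" where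
  "comultD mult Delta U d =
     [ ((m2, x1), (m1, x2)). (m,x) \<leftarrow> d, (m1,m2) \<leftarrow> DeltaU mult U m, (x1,x2) \<leftarrow> Delta x ]"

definition counitD :: "'h \<Rightarrow> ('h \<Rightarrow> 'k::field) \<Rightarrow> (('h \<Rightarrow> 'k) \<times> 'h) list \<Rightarrow> 'k" where
  "counitD one eps d = sum_list [m one * eps x. (m,x) \<leftarrow> d]"

definition piD :: "('h \<Rightarrow> ('h \<times> 'h) list) \<Rightarrow> ('h \<Rightarrow> 'h) \<Rightarrow> ('h \<Rightarrow> 'h \<Rightarrow> 'k::field)
    \<Rightarrow> (('h \<Rightarrow> 'k) \<times> 'h) list \<Rightarrow> 'h \<Rightarrow> 'k" where
  "piD Delta S \<sigma> d = (\<lambda>h. sum_list [conv Delta m (lfun \<sigma> (inv S y)) h. (m,y) \<leftarrow> d])"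

end

theory Submission
  imports Defs "HOL.Vector_Spaces"
begin

lemma sum_list_swap:
  "(\<Sum>x\<leftarrow>A. \<Sum>y\<leftarrow>B. f x y) = (\<Sum>y\<leftarrow>B. \<Sum>x\<leftarrow>A. (f x y :: 'a::comm_monoid_add))"
  by (induction A) (simp_all add: sum_list_addf)

lemma sum_list_map_concat_pair:
  "sum_list (map f (concat (map (\<lambda>(a,b). G a b) L))) = (\<Sum>(a,b)\<leftarrow>L. sum_list (map f (G a b)))"
  by (induction L) auto

lemma map_map_pair:
  "map f (map (\<lambda>(a,b). g a b) L) = map (\<lambda>(a,b). f (g a b)) L"
  by (induction L) auto

lemma sum_map_pair_comp[simp]: "sum_list (map (f \<circ> (\<lambda>(c,d). g c d)) M) = (\<Sum>(c,d)\<leftarrow>M. f (g c d))"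
  by (induction M) auto

lemma sum_concat_map_Pair[simp]:
  "(\<Sum>x\<leftarrow>concat (map (\<lambda>(a,b). map (Pair a) (M a b)) L). f x) = (\<Sum>(a,b)\<leftarrow>L. \<Sum>y\<leftarrow>M a b. f (a,y))"
  by (induction L) (auto simp: comp_def)

lemma sum_map_pair[simp]: "(\<Sum>x\<leftarrow>map (\<lambda>(c,d). g c d) M. f x) = (\<Sum>(c,d)\<leftarrow>M. f (g c d))"
  by (induction M) auto

lemma sum_concat_map2[simp]:
  "(\<Sum>x\<leftarrow>concat (map (\<lambda>(a,b). map (\<lambda>(c,d). g a b c d) (M a b)) L). f x) = (\<Sum>(a,b)\<leftarrow>L. \<Sum>(c,d)\<leftarrow>M a b. f (g a b c d))"
  by (induction L) auto

lemma sum_concat_map2'[simp]: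
  "sum_list (concat (map (\<lambda>(a,b). map (\<lambda>(c,d). g a b c d) (M a b)) L)) = (\<Sum>(a,b)\<leftarrow>L. \<Sum>(c,d)\<leftarrow>M a b. g a b c d)"
  by (induction L) (auto simp: comp_def)

lemma vk: "vector_space ((*) :: 'k::field \<Rightarrow> 'k \<Rightarrow> 'k)"
  unfolding vector_space_def by (simp_all add: algebra_simps)

lemma separation:
  fixes sc :: "'k::field \<Rightarrow> 'h::ab_group_add \<Rightarrow> 'h"
  assumes vs: "vector_space sc" and x: "x \<noteq> 0"
  shows "\<exists>\<phi>. lin sc \<phi> \<and> \<phi> x = 1"
proof -
  interpret vector_space_pair sc "(*) :: 'k \<Rightarrow> 'k \<Rightarrow> 'k"
    using vs vk by (simp add: vector_space_pair_def)
  have ind: "vs1.independent {x}"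
    using x by (intro vs1.independent_insertI) (auto simp: vs1.span_empty vs1.independent_empty)
  note lc = linear_construct[OF ind, of "\<lambda>_. 1"]
  have "construct {x} (\<lambda>_. 1) x = 1" by (rule construct_basis[OF ind]) simp
  moreover have "lin sc (construct {x} (\<lambda>_. 1))"
    using lc unfolding lin_def by (simp add: linear_iff)
  ultimately show ?thesis by blast
qed

locale hopfL =
  fixes sc :: "'k::field \<Rightarrow> 'h::ab_group_add \<Rightarrow> 'h" and mult :: "'h \<Rightarrow> 'h \<Rightarrow> 'h" and one :: 'h
    and Delta :: "'h \<Rightarrow> ('h \<times> 'h) list" and eps :: "'h \<Rightarrow> 'k" and S :: "'h \<Rightarrow> 'h"
  assumes H: "hopf_algebra sc mult one Delta eps S"
begin

lemmas HA = H[unfolded hopf_algebra_def]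

lemma sc_addr: "sc a (b + c) = sc a b + sc a c" using HA by simp
lemma sc_addl: "sc (a + b) x = sc a x + sc b x" using HA by simp
lemma sc_sc: "sc a (sc b x) = sc (a * b) x" using HA by simp
lemma sc_one[simp]: "sc 1 x = x" using HA by simp
lemma mult_addl: "mult (a + b) c = mult a c + mult b c" using HA by simp
lemma mult_addr: "mult a (b + c) = mult a b + mult a c" using HA by simp
lemma mult_scl: "mult (sc k a) b = sc k (mult a b)" using HA by simp
lemma mult_scr: "mult a (sc k b) = sc k (mult a b)" using HA by simp
lemma mult_assoc: "mult (mult a b) c = mult a (mult b c)" using HA by simp
lemma mult_one[simp]: "mult one a = a" "mult a one = a" using HA by simp_all
lemma Delta_add: "teq2 sc (Delta (a + b)) (Delta a @ Delta b)" using HA by simp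
lemma Delta_sc: "teq2 sc (Delta (sc k a)) (map (\<lambda>(p,q). (sc k p, q)) (Delta a))"
  using HA by simp
lemma Delta_coassoc: "teq3 sc [(p1, p2, q). (p,q) \<leftarrow> Delta h, (p1,p2) \<leftarrow> Delta p]
                  [(p, q1, q2). (p,q) \<leftarrow> Delta h, (q1,q2) \<leftarrow> Delta q]"
  using HA by simp
lemma lin_eps: "lin sc eps" using HA by simp
lemma counit1: "(\<Sum>(p,q)\<leftarrow>Delta h. sc (eps p) q) = h" using HA by simp
lemma counit2: "(\<Sum>(p,q)\<leftarrow>Delta h. sc (eps q) p) = h" using HA by simp
lemma Delta_mult: "teq2 sc (Delta (mult a b))
                [(mult a1 b1, mult a2 b2). (a1,a2) \<leftarrow> Delta a, (b1,b2) \<leftarrow> Delta b]"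
  using HA by simp
lemma Delta_one: "teq2 sc (Delta one) [(one, one)]" using HA by simp
lemma eps_mult: "eps (mult a b) = eps a * eps b" using HA by simp
lemma eps_one[simp]: "eps one = 1" using HA by simp
lemma linH_S: "linH sc S" using HA by simp
lemma antip1: "(\<Sum>(p,q)\<leftarrow>Delta h. mult (S p) q) = sc (eps h) one" using HA by simp
lemma antip2: "(\<Sum>(p,q)\<leftarrow>Delta h. mult p (S q)) = sc (eps h) one" using HA by simp
lemma bij_S: "bij S" using HA by simp

lemma vs: "vector_space sc"
  unfolding vector_space_def using sc_addr sc_addl sc_sc by simp

lemma sc_zero[simp]: "sc a 0 = 0"
  using sc_addr[of a 0 0] by simp
lemma sc_zerol[simp]: "sc 0 x = 0"
  using sc_addl[of 0 0 x] by simp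

lemma mult_zero[simp]: "mult 0 a = 0" "mult a 0 = 0"
  using mult_addl[of 0 0 a] mult_addr[of a 0 0] by simp_all

lemma lin_add: "lin sc f \<Longrightarrow> f (a + b) = f a + f b" by (simp add: lin_def)
lemma lin_sc: "lin sc f \<Longrightarrow> f (sc c a) = c * f a" by (simp add: lin_def)
lemma lin_zero: "lin sc f \<Longrightarrow> f 0 = 0" using lin_add[of f 0 0] by (metis add.right_neutral add_left_cancel)
lemma lin_sum: "lin sc f \<Longrightarrow> f (\<Sum>x\<leftarrow>L. g x) = (\<Sum>x\<leftarrow>L. f (g x))"
  by (induction L) (simp_all add: lin_zero lin_add)
lemma lin_diff: "lin sc f \<Longrightarrow> f (a - b) = f a - f b"
  using lin_add[of f "a - b" b] by simp

lemma linH_add: "linH sc f \<Longrightarrow> f (a + b) = f a + f b" by (simp add: linH_def)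
lemma linH_sc: "linH sc f \<Longrightarrow> f (sc c a) = sc c (f a)" by (simp add: linH_def)
lemma linH_zero: "linH sc f \<Longrightarrow> f 0 = 0" using linH_add[of f 0 0] by (metis add.right_neutral add_left_cancel)
lemma linH_sum: "linH sc f \<Longrightarrow> f (\<Sum>x\<leftarrow>L. g x) = (\<Sum>x\<leftarrow>L. f (g x))"
  by (induction L) (simp_all add: linH_zero linH_add)

lemma sc_sum: "sc c (\<Sum>x\<leftarrow>L. g x) = (\<Sum>x\<leftarrow>L. sc c (g x))"
  by (induction L) (simp_all add: sc_addr)
lemma mult_suml: "mult (\<Sum>x\<leftarrow>L. g x) b = (\<Sum>x\<leftarrow>L. mult (g x) b)"
  by (induction L) (simp_all add: mult_addl)
lemma mult_sumr: "mult b (\<Sum>x\<leftarrow>L. g x) = (\<Sum>x\<leftarrow>L. mult b (g x))"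
  by (induction L) (simp_all add: mult_addr)

lemma sep_eq:
  assumes "\<And>\<phi>. lin sc \<phi> \<Longrightarrow> \<phi> u = \<phi> v"
  shows "u = v"
proof (rule ccontr)
  assume "u \<noteq> v"
  then have "u - v \<noteq> 0" by simp
  then obtain \<phi> where "lin sc \<phi>" "\<phi> (u - v) = 1" using separation[OF vs] by blast
  then show False using assms[of \<phi>] lin_diff[of \<phi> u v] by simp
qed

named_theorems linI

lemma lin_cmul[linI]: "lin sc f \<Longrightarrow> lin sc (\<lambda>h. c * f h)"
  by (simp add: lin_def algebra_simps)
lemma lin_mulc[linI]: "lin sc f \<Longrightarrow> lin sc (\<lambda>h. f h * c)"
  by (simp add: lin_def algebra_simps)
lemma lin_plus[linI]: "lin sc f \<Longrightarrow> lin sc g \<Longrightarrow> lin sc (\<lambda>h. f h + g h)"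
  by (simp add: lin_def algebra_simps)
lemma lin_compH: "lin sc f \<Longrightarrow> linH sc g \<Longrightarrow> lin sc (\<lambda>h. f (g h))"
  by (simp add: lin_def linH_def)
lemma lin_eps'[linI]: "linH sc g \<Longrightarrow> lin sc (\<lambda>h. eps (g h))"
  using lin_compH[OF lin_eps] .
lemma lin_suml: "(\<And>x. lin sc (\<lambda>h. G x h)) \<Longrightarrow> lin sc (\<lambda>h. \<Sum>x\<leftarrow>L. G x h)"
  unfolding lin_def by (induction L) (simp_all add: sum_list_addf sum_list_const_mult distrib_left)
lemma lin_suml2[linI]: "(\<And>p q. lin sc (\<lambda>h. G p q h)) \<Longrightarrow> lin sc (\<lambda>h. \<Sum>(p,q)\<leftarrow>L. G p q h)"
  unfolding lin_def by (induction L) (auto simp: sum_list_addf sum_list_const_mult distrib_left)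

lemma linH_id[linI]: "linH sc (\<lambda>h. h)" by (simp add: linH_def)
lemma linH_multl[linI]: "linH sc g \<Longrightarrow> linH sc (\<lambda>h. mult (g h) c)"
  by (simp add: linH_def mult_addl mult_scl)
lemma linH_multr[linI]: "linH sc g \<Longrightarrow> linH sc (\<lambda>h. mult c (g h))"
  by (simp add: linH_def mult_addr mult_scr)
lemma linH_S'[linI]: "linH sc g \<Longrightarrow> linH sc (\<lambda>h. S (g h))"
  using linH_S by (simp add: linH_def)
lemma linH_sc'[linI]: "linH sc g \<Longrightarrow> linH sc (\<lambda>h. sc c (g h))"
  by (simp add: linH_def sc_addr sc_sc mult.commute)

lemma teq2_sum: "teq2 sc L M \<Longrightarrow> (\<And>b. lin sc (\<lambda>a. F a b)) \<Longrightarrow> (\<And>a. lin sc (\<lambda>b. F a b))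
   \<Longrightarrow> (\<Sum>(a,b)\<leftarrow>L. F a b) = (\<Sum>(a,b)\<leftarrow>M. F a b)"
  unfolding teq2_def bil_def by auto

lemma teq2_sumH: assumes "teq2 sc L M" "\<And>b. linH sc (\<lambda>a. G a b)" "\<And>a. linH sc (\<lambda>b. G a b)"
  shows "(\<Sum>(a,b)\<leftarrow>L. G a b) = (\<Sum>(a,b)\<leftarrow>M. G a b)"
proof (rule sep_eq)
  fix \<phi> assume p: "lin sc \<phi>"
  have e: "\<phi> (\<Sum>(a,b)\<leftarrow>K. G a b) = (\<Sum>(a,b)\<leftarrow>K. \<phi> (G a b))" for K
    using lin_sum[OF p, of "\<lambda>(a,b). G a b" K] by (simp add: case_prod_beta')
  show "\<phi> (\<Sum>(a,b)\<leftarrow>L. G a b) = \<phi> (\<Sum>(a,b)\<leftarrow>M. G a b)"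
    unfolding e using assms by (intro teq2_sum) (auto intro: lin_compH[OF p])
qed

end


context hopfL begin

lemma lin_sum2: "lin sc f \<Longrightarrow> f (\<Sum>(p,q)\<leftarrow>L. g p q) = (\<Sum>(p,q)\<leftarrow>L. f (g p q))"
  by (induction L) (auto simp: lin_zero lin_add)
lemma linH_sum2: "linH sc f \<Longrightarrow> f (\<Sum>(p,q)\<leftarrow>L. g p q) = (\<Sum>(p,q)\<leftarrow>L. f (g p q))"
  by (induction L) (auto simp: linH_zero linH_add)
lemma sc_sum2: "sc c (\<Sum>(p,q)\<leftarrow>L. g p q) = (\<Sum>(p,q)\<leftarrow>L. sc c (g p q))"
  by (induction L) (auto simp: sc_addr)
lemma mult_suml2: "mult (\<Sum>(p,q)\<leftarrow>L. g p q) b = (\<Sum>(p,q)\<leftarrow>L. mult (g p q) b)"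
  by (induction L) (auto simp: mult_addl)
lemma mult_sumr2: "mult b (\<Sum>(p,q)\<leftarrow>L. g p q) = (\<Sum>(p,q)\<leftarrow>L. mult b (g p q))"
  by (induction L) (auto simp: mult_addr)
lemma cmul_sum2: "c * (\<Sum>(p,q)\<leftarrow>L. g p q) = (\<Sum>(p,q)\<leftarrow>L. c * (g p q :: 'a::semiring_0))"
  by (induction L) (auto simp: distrib_left)
lemma mulc_sum2: "(\<Sum>(p,q)\<leftarrow>L. g p q) * c = (\<Sum>(p,q)\<leftarrow>L. (g p q :: 'a::semiring_0) * c)"
  by (induction L) (auto simp: distrib_right)
lemma sum2_add: "(\<Sum>(p,q)\<leftarrow>L. (g p q + g' p q :: 'a::comm_monoid_add)) = (\<Sum>(p,q)\<leftarrow>L. g p q) + (\<Sum>(p,q)\<leftarrow>L. g' p q)"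
  by (induction L) (auto simp: algebra_simps)
lemma sum2_swap:
  "(\<Sum>(p,q)\<leftarrow>A. \<Sum>(p',q')\<leftarrow>B. f p q p' q') = (\<Sum>(p',q')\<leftarrow>B. \<Sum>(p,q)\<leftarrow>A. (f p q p' q' :: 'a::comm_monoid_add))"
  using sum_list_swap[of "\<lambda>x y. f (fst x) (snd x) (fst y) (snd y)" B A]
  by (simp add: case_prod_beta')
lemma sum21_swap:
  "(\<Sum>(p,q)\<leftarrow>A. \<Sum>x\<leftarrow>B. f p q x) = (\<Sum>x\<leftarrow>B. \<Sum>(p,q)\<leftarrow>A. (f p q x :: 'a::comm_monoid_add))"
  using sum_list_swap[of "\<lambda>x y. f (fst x) (snd x) y" B A]
  by (simp add: case_prod_beta')
lemma sum2_cong: "(\<And>p q. (p,q) \<in> set L \<Longrightarrow> f p q = g p q) \<Longrightarrow> (\<Sum>(p,q)\<leftarrow>L. f p q) = (\<Sum>(p,q)\<leftarrow>L. g p q)"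
  by (induction L) auto

lemma sw_lin[linI]:
  assumes "\<And>b. lin sc (\<lambda>a. F a b)" "\<And>a. lin sc (\<lambda>b. F a b)"
  shows "lin sc (\<lambda>h. \<Sum>(p,q)\<leftarrow>Delta h. F p q)"
  unfolding lin_def
proof safe
  fix a b
  show "(\<Sum>(p,q)\<leftarrow>Delta (a + b). F p q) = (\<Sum>(p,q)\<leftarrow>Delta a. F p q) + (\<Sum>(p,q)\<leftarrow>Delta b. F p q)"
    using teq2_sum[OF Delta_add assms] by simp
next
  fix c a
  have "(\<Sum>(p,q)\<leftarrow>Delta (sc c a). F p q) = (\<Sum>(p,q)\<leftarrow>map (\<lambda>(p,q). (sc c p, q)) (Delta a). F p q)"
    using teq2_sum[OF Delta_sc assms] by simp
  also have "\<dots> = (\<Sum>(p,q)\<leftarrow>Delta a. c * F p q)"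
    by (simp add: lin_sc[OF assms(1)])
  finally show "(\<Sum>(p,q)\<leftarrow>Delta (sc c a). F p q) = c * (\<Sum>(p,q)\<leftarrow>Delta a. F p q)"
    by (simp add: cmul_sum2)
qed

lemma sw_linH[linI]:
  assumes "\<And>b. lin sc (\<lambda>a. F a b)" "\<And>a. lin sc (\<lambda>b. F a b)" "linH sc g"
  shows "lin sc (\<lambda>h. \<Sum>(p,q)\<leftarrow>Delta (g h). F p q)"
  using lin_compH[OF sw_lin[OF assms(1,2)] assms(3)] .

lemma coassoc:
  assumes "\<And>b c. lin sc (\<lambda>a. F a b c)" "\<And>a c. lin sc (\<lambda>b. F a b c)" "\<And>a b. lin sc (\<lambda>c. F a b c)"
  shows "(\<Sum>(p,q)\<leftarrow>Delta h. \<Sum>(p1,p2)\<leftarrow>Delta p. F p1 p2 q) = (\<Sum>(p,q)\<leftarrow>Delta h. \<Sum>(q1,q2)\<leftarrow>Delta q. F p q1 q2)"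
proof -
  have t: "tril sc F" using assms unfolding tril_def by blast
  show ?thesis using Delta_coassoc[of h] t unfolding teq3_def
    by simp
qed

lemma coassocH:
  assumes "\<And>b c. linH sc (\<lambda>a. F a b c)" "\<And>a c. linH sc (\<lambda>b. F a b c)" "\<And>a b. linH sc (\<lambda>c. F a b c)"
  shows "(\<Sum>(p,q)\<leftarrow>Delta h. \<Sum>(p1,p2)\<leftarrow>Delta p. F p1 p2 q) = (\<Sum>(p,q)\<leftarrow>Delta h. \<Sum>(q1,q2)\<leftarrow>Delta q. F p q1 q2)"
proof (rule sep_eq)
  fix \<phi> assume p: "lin sc \<phi>"
  have "(\<Sum>(p,q)\<leftarrow>Delta h. \<Sum>(p1,p2)\<leftarrow>Delta p. \<phi> (F p1 p2 q)) = (\<Sum>(p,q)\<leftarrow>Delta h. \<Sum>(q1,q2)\<leftarrow>Delta q. \<phi> (F p q1 q2))"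
    by (rule coassoc; rule lin_compH[OF p]; rule assms)
  then show "\<phi> (\<Sum>(p,q)\<leftarrow>Delta h. \<Sum>(p1,p2)\<leftarrow>Delta p. F p1 p2 q) = \<phi> (\<Sum>(p,q)\<leftarrow>Delta h. \<Sum>(q1,q2)\<leftarrow>Delta q. F p q1 q2)"
    by (simp add: lin_sum2[OF p])
qed

lemma counitL: "lin sc \<phi> \<Longrightarrow> (\<Sum>(p,q)\<leftarrow>Delta h. eps p * \<phi> q) = \<phi> h"
  using arg_cong[OF counit1[of h], of \<phi>] by (simp add: lin_sum2 lin_sc)
lemma counitR: "lin sc \<phi> \<Longrightarrow> (\<Sum>(p,q)\<leftarrow>Delta h. \<phi> p * eps q) = \<phi> h"
  using arg_cong[OF counit2[of h], of \<phi>] by (simp add: lin_sum2 lin_sc mult.commute)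

lemma multD:
  assumes "\<And>b. lin sc (\<lambda>a. F a b)" "\<And>a. lin sc (\<lambda>b. F a b)"
  shows "(\<Sum>(p,q)\<leftarrow>Delta (mult a b). F p q) = (\<Sum>(a1,a2)\<leftarrow>Delta a. \<Sum>(b1,b2)\<leftarrow>Delta b. F (mult a1 b1) (mult a2 b2))"
  using teq2_sum[OF Delta_mult assms] by simp

lemma multDH:
  assumes "\<And>b. linH sc (\<lambda>a. F a b)" "\<And>a. linH sc (\<lambda>b. F a b)"
  shows "(\<Sum>(p,q)\<leftarrow>Delta (mult a b). F p q) = (\<Sum>(a1,a2)\<leftarrow>Delta a. \<Sum>(b1,b2)\<leftarrow>Delta b. F (mult a1 b1) (mult a2 b2))"
  using teq2_sumH[OF Delta_mult assms] by simp

lemma oneD: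
  assumes "\<And>b. lin sc (\<lambda>a. F a b)" "\<And>a. lin sc (\<lambda>b. F a b)"
  shows "(\<Sum>(p,q)\<leftarrow>Delta one. F p q) = F one one"
  using teq2_sum[OF Delta_one assms] by simp

lemma oneDH:
  assumes "\<And>b. linH sc (\<lambda>a. F a b)" "\<And>a. linH sc (\<lambda>b. F a b)"
  shows "(\<Sum>(p,q)\<leftarrow>Delta one. F p q) = F one one"
  using teq2_sumH[OF Delta_one assms] by simp

lemma antipL: "lin sc \<phi> \<Longrightarrow> (\<Sum>(p,q)\<leftarrow>Delta h. \<phi> (mult (S p) q)) = eps h * \<phi> one"
  using arg_cong[OF antip1[of h], of \<phi>] by (simp add: lin_sum2 lin_sc)
lemma antipR: "lin sc \<phi> \<Longrightarrow> (\<Sum>(p,q)\<leftarrow>Delta h. \<phi> (mult p (S q))) = eps h * \<phi> one"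
  using arg_cong[OF antip2[of h], of \<phi>] by (simp add: lin_sum2 lin_sc)

lemma S_one: "S one = one"
proof -
  have "(\<Sum>(p,q)\<leftarrow>Delta one. mult (S p) q) = mult (S one) one"
    by (rule oneDH) (intro linI)+
  then show ?thesis using antip1[of one] by simp
qed

lemma lin_epsS: "lin sc (\<lambda>h. eps (S h))" by (intro linI)

lemma eps_S: "eps (S h) = eps h"
proof -
  have "eps (\<Sum>(p,q)\<leftarrow>Delta h. mult (S p) q) = (\<Sum>(p,q)\<leftarrow>Delta h. eps (S p) * eps q)"
    by (simp add: lin_sum2[OF lin_eps] eps_mult)
  also have "\<dots> = eps (S h)" by (rule counitR[OF lin_epsS])
  finally show ?thesis using antip1[of h] lin_sc[OF lin_eps] by simp
qed

end


context hopfL begin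

lemma S_mult: "S (mult a b) = mult (S b) (S a)"
proof (rule sep_eq)
  fix \<phi> assume p: "lin sc \<phi>"
  note lp = lin_compH[OF p]
  define \<Psi> where "\<Psi> a1 a2 a3 b1 b2 b3 = \<phi> (mult (S (mult a1 b1)) (mult (mult a2 b2) (mult (S b3) (S a3))))" for a1 a2 a3 b1 b2 b3
  define Q where "Q = (\<Sum>(a1,a')\<leftarrow>Delta a. \<Sum>(a2,a3)\<leftarrow>Delta a'. \<Sum>(b1,b')\<leftarrow>Delta b. \<Sum>(b2,b3)\<leftarrow>Delta b'. \<Psi> a1 a2 a3 b1 b2 b3)"
  have s1: "(\<Sum>(b2,b3)\<leftarrow>Delta b'. \<Psi> a1 a2 a3 b1 b2 b3) = \<phi> (mult (S (mult a1 b1)) (mult a2 (S a3))) * eps b'"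
    for a1 a2 a3 b1 b'
  proof -
    have "(\<Sum>(b2,b3)\<leftarrow>Delta b'. \<Psi> a1 a2 a3 b1 b2 b3)
        = (\<Sum>(b2,b3)\<leftarrow>Delta b'. (\<lambda>z. \<phi> (mult (S (mult a1 b1)) (mult a2 (mult z (S a3))))) (mult b2 (S b3)))"
      unfolding \<Psi>_def by (simp add: mult_assoc)
    also have "\<dots> = eps b' * \<phi> (mult (S (mult a1 b1)) (mult a2 (mult one (S a3))))"
      by (rule antipR) (intro linI lp)
    finally show ?thesis by simp
  qed
  have s2: "(\<Sum>(b1,b')\<leftarrow>Delta b. \<phi> (mult (S (mult a1 b1)) X) * eps b') = \<phi> (mult (S (mult a1 b)) X)" for a1 X
    by (rule counitR) (intro linI lp)
  have s3: "(\<Sum>(a2,a3)\<leftarrow>Delta a'. \<phi> (mult (S (mult a1 b)) (mult a2 (S a3)))) = \<phi> (S (mult a1 b)) * eps a'" for a1 a'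
  proof -
    have "(\<Sum>(a2,a3)\<leftarrow>Delta a'. \<phi> (mult (S (mult a1 b)) (mult a2 (S a3)))) = eps a' * \<phi> (mult (S (mult a1 b)) one)"
      by (rule antipR) (intro linI lp)
    then show ?thesis by simp
  qed
  have s4: "(\<Sum>(a1,a')\<leftarrow>Delta a. \<phi> (S (mult a1 b)) * eps a') = \<phi> (S (mult a b))"
    by (rule counitR) (intro linI lp)
  have Q1: "Q = \<phi> (S (mult a b))"
    unfolding Q_def s1 s2 s3 s4 by (simp add: s2 s3 s4)
  have c1: "Q = (\<Sum>(a'',a3)\<leftarrow>Delta a. \<Sum>(a1,a2)\<leftarrow>Delta a''. \<Sum>(b1,b')\<leftarrow>Delta b. \<Sum>(b2,b3)\<leftarrow>Delta b'. \<Psi> a1 a2 a3 b1 b2 b3)"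
    unfolding Q_def \<Psi>_def by (rule coassoc[symmetric]) (intro linI lp)+
  have c2: "(\<Sum>(b1,b')\<leftarrow>Delta b. \<Sum>(b2,b3)\<leftarrow>Delta b'. \<Psi> a1 a2 a3 b1 b2 b3)
      = (\<Sum>(b'',b3)\<leftarrow>Delta b. \<Sum>(b1,b2)\<leftarrow>Delta b''. \<Psi> a1 a2 a3 b1 b2 b3)" for a1 a2 a3
    unfolding \<Psi>_def by (rule coassoc[symmetric]) (intro linI lp)+
  have inner: "(\<Sum>(a1,a2)\<leftarrow>Delta a''. \<Sum>(b1,b2)\<leftarrow>Delta b''. \<Psi> a1 a2 a3 b1 b2 b3)
      = eps a'' * (eps b'' * \<phi> (mult (S b3) (S a3)))" for a'' b'' a3 b3
  proof -
    let ?Y = "mult (S b3) (S a3)"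
    have "(\<Sum>(a1,a2)\<leftarrow>Delta a''. \<Sum>(b1,b2)\<leftarrow>Delta b''. \<Psi> a1 a2 a3 b1 b2 b3)
       = \<phi> (mult (\<Sum>(a1,a2)\<leftarrow>Delta a''. \<Sum>(b1,b2)\<leftarrow>Delta b''. mult (S (mult a1 b1)) (mult a2 b2)) ?Y)"
      unfolding \<Psi>_def by (simp add: mult_suml2 lin_sum2[OF p] mult_assoc)
    also have "(\<Sum>(a1,a2)\<leftarrow>Delta a''. \<Sum>(b1,b2)\<leftarrow>Delta b''. mult (S (mult a1 b1)) (mult a2 b2))
        = (\<Sum>(p,q)\<leftarrow>Delta (mult a'' b''). mult (S p) q)"
      by (rule multDH[symmetric]) (intro linI)+
    also have "\<dots> = sc (eps a'' * eps b'') one" by (simp add: antip1 eps_mult)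
    finally show ?thesis by (simp add: mult_scl lin_sc[OF p])
  qed
  have Q2: "Q = \<phi> (mult (S b) (S a))"
  proof -
    have "Q = (\<Sum>(a'',a3)\<leftarrow>Delta a. \<Sum>(b'',b3)\<leftarrow>Delta b. \<Sum>(a1,a2)\<leftarrow>Delta a''. \<Sum>(b1,b2)\<leftarrow>Delta b''. \<Psi> a1 a2 a3 b1 b2 b3)"
      unfolding c1 c2 by (intro sum2_cong) (rule sum2_swap)
    also have "\<dots> = (\<Sum>(a'',a3)\<leftarrow>Delta a. eps a'' * (\<Sum>(b'',b3)\<leftarrow>Delta b. eps b'' * \<phi> (mult (S b3) (S a3))))"
      by (simp add: inner cmul_sum2)
    also have "\<dots> = (\<Sum>(a'',a3)\<leftarrow>Delta a. eps a'' * \<phi> (mult (S b) (S a3)))"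
      by (subst counitL) (intro linI lp, rule refl)
    also have "\<dots> = \<phi> (mult (S b) (S a))"
      by (rule counitL) (intro linI lp)
    finally show ?thesis .
  qed
  show "\<phi> (S (mult a b)) = \<phi> (mult (S b) (S a))" using Q1 Q2 by simp
qed

end


context hopfL begin

lemma pull2:
  "(\<Sum>(a,b)\<leftarrow>A. \<Sum>(c,d)\<leftarrow>B a b. \<Sum>(x,y)\<leftarrow>W. F a b c d x y)
   = (\<Sum>(x,y)\<leftarrow>W. \<Sum>(a,b)\<leftarrow>A. \<Sum>(c,d)\<leftarrow>B a b. (F a b c d x y :: 'a::comm_monoid_add))"
proof -
  have "(\<Sum>(a,b)\<leftarrow>A. \<Sum>(c,d)\<leftarrow>B a b. \<Sum>(x,y)\<leftarrow>W. F a b c d x y)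
      = (\<Sum>(a,b)\<leftarrow>A. \<Sum>(x,y)\<leftarrow>W. \<Sum>(c,d)\<leftarrow>B a b. F a b c d x y)"
    by (intro sum2_cong) (rule sum2_swap)
  also have "\<dots> = (\<Sum>(x,y)\<leftarrow>W. \<Sum>(a,b)\<leftarrow>A. \<Sum>(c,d)\<leftarrow>B a b. F a b c d x y)"
    by (rule sum2_swap)
  finally show ?thesis .
qed

lemma pull3:
  "(\<Sum>(a,b)\<leftarrow>A. \<Sum>(c,d)\<leftarrow>B a b. \<Sum>(e,f)\<leftarrow>C a b c d. \<Sum>(x,y)\<leftarrow>W. F a b c d e f x y)
   = (\<Sum>(x,y)\<leftarrow>W. \<Sum>(a,b)\<leftarrow>A. \<Sum>(c,d)\<leftarrow>B a b. \<Sum>(e,f)\<leftarrow>C a b c d. (F a b c d e f x y :: 'a::comm_monoid_add))"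
proof -
  have "(\<Sum>(a,b)\<leftarrow>A. \<Sum>(c,d)\<leftarrow>B a b. \<Sum>(e,f)\<leftarrow>C a b c d. \<Sum>(x,y)\<leftarrow>W. F a b c d e f x y)
      = (\<Sum>(a,b)\<leftarrow>A. \<Sum>(x,y)\<leftarrow>W. \<Sum>(c,d)\<leftarrow>B a b. \<Sum>(e,f)\<leftarrow>C a b c d. F a b c d e f x y)"
    by (intro sum2_cong) (rule pull2)
  also have "\<dots> = (\<Sum>(x,y)\<leftarrow>W. \<Sum>(a,b)\<leftarrow>A. \<Sum>(c,d)\<leftarrow>B a b. \<Sum>(e,f)\<leftarrow>C a b c d. F a b c d e f x y)"
    by (rule sum2_swap)
  finally show ?thesis .
qed

definition T where "T = inv S"

lemma S_T[simp]: "S (T x) = x" unfolding T_def using bij_S by (simp add: bij_is_surj surj_f_inv_f)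
lemma T_S[simp]: "T (S x) = x" unfolding T_def using bij_S by (simp add: bij_is_inj inv_f_f)
lemma S_inj: "S x = S y \<Longrightarrow> x = y" using T_S by metis

lemma linH_T: "linH sc T"
  unfolding linH_def
proof safe
  fix a b show "T (a + b) = T a + T b"
    by (rule S_inj) (simp add: linH_add[OF linH_S])
next
  fix c a show "T (sc c a) = sc c (T a)"
    by (rule S_inj) (simp add: linH_sc[OF linH_S])
qed

lemma linH_T'[linI]: "linH sc g \<Longrightarrow> linH sc (\<lambda>h. T (g h))"
  using linH_T by (simp add: linH_def)

lemma T_one[simp]: "T one = one" by (rule S_inj) (simp add: S_one)
lemma S_one'[simp]: "S one = one" by (rule S_one)
lemma T_mult: "T (mult a b) = mult (T b) (T a)" by (rule S_inj) (simp add: S_mult)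
lemma eps_T: "eps (T h) = eps h" using eps_S[of "T h"] by simp

lemma T_antip: "(\<Sum>(p,q)\<leftarrow>Delta z. mult (T q) p) = sc (eps z) one"
proof (rule S_inj)
  show "S (\<Sum>(p,q)\<leftarrow>Delta z. mult (T q) p) = S (sc (eps z) one)"
    by (simp add: linH_sum2[OF linH_S] S_mult linH_sc[OF linH_S] antip1)
qed

lemma GA:
  assumes g1: "\<And>b. lin sc (\<lambda>a. G a b)" and g2: "\<And>a. lin sc (\<lambda>b. G a b)"
  shows "(\<Sum>(t,w)\<leftarrow>Delta k. \<Sum>(t1,t2)\<leftarrow>Delta t. \<Sum>(w1,w2)\<leftarrow>Delta w. G (mult t1 (S w2)) (mult t2 (S w1)))
     = eps k * G one one"
proof -
  note L = lin_compH[OF g1] lin_compH[OF g2]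
  have "(\<Sum>(t,w)\<leftarrow>Delta k. \<Sum>(t1,t2)\<leftarrow>Delta t. \<Sum>(w1,w2)\<leftarrow>Delta w. G (mult t1 (S w2)) (mult t2 (S w1)))
     = (\<Sum>(t1,c)\<leftarrow>Delta k. \<Sum>(t2,w)\<leftarrow>Delta c. \<Sum>(w1,w2)\<leftarrow>Delta w. G (mult t1 (S w2)) (mult t2 (S w1)))"
    by (rule coassoc) (intro linI L)+
  also have "\<dots> = (\<Sum>(t1,c)\<leftarrow>Delta k. \<Sum>(e,w2)\<leftarrow>Delta c. \<Sum>(t2,w1)\<leftarrow>Delta e. G (mult t1 (S w2)) (mult t2 (S w1)))"
    by (intro sum2_cong coassoc[symmetric]) (intro linI L)+
  also have "\<dots> = (\<Sum>(t1,c)\<leftarrow>Delta k. \<Sum>(e,w2)\<leftarrow>Delta c. eps e * G (mult t1 (S w2)) one)"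
    by (intro sum2_cong antipR) (intro linI L)
  also have "\<dots> = (\<Sum>(t1,c)\<leftarrow>Delta k. G (mult t1 (S c)) one)"
    by (intro sum2_cong counitL) (intro linI L)
  also have "\<dots> = eps k * G one one"
    using antipR[of "\<lambda>z. G z one" k] by (simp add: g1)
  finally show ?thesis .
qed

lemma GB:
  assumes g1: "\<And>b. lin sc (\<lambda>a. G a b)" and g2: "\<And>a. lin sc (\<lambda>b. G a b)"
  shows "(\<Sum>(h1,t)\<leftarrow>Delta j. \<Sum>(s1,s2)\<leftarrow>Delta (S h1). \<Sum>(t1,t2)\<leftarrow>Delta t. G (mult s1 t1) (mult s2 t2))
     = eps j * G one one"
proof -
  have "(\<Sum>(h1,t)\<leftarrow>Delta j. \<Sum>(s1,s2)\<leftarrow>Delta (S h1). \<Sum>(t1,t2)\<leftarrow>Delta t. G (mult s1 t1) (mult s2 t2))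
      = (\<Sum>(h1,t)\<leftarrow>Delta j. (\<lambda>z. \<Sum>(p,q)\<leftarrow>Delta z. G p q) (mult (S h1) t))"
    by (intro sum2_cong) (simp add: multD[OF g1 g2])
  also have "\<dots> = eps j * (\<Sum>(p,q)\<leftarrow>Delta one. G p q)"
    by (rule antipL) (intro sw_lin g1 g2)
  also have "\<dots> = eps j * G one one" by (simp add: oneD[OF g1 g2])
  finally show ?thesis .
qed

lemma Delta_S:
  assumes f1: "\<And>b. lin sc (\<lambda>a. F a b)" and f2: "\<And>a. lin sc (\<lambda>b. F a b)"
  shows "(\<Sum>(p,q)\<leftarrow>Delta (S h). F p q) = (\<Sum>(p,q)\<leftarrow>Delta h. F (S q) (S p))"
proof -
  note L = lin_compH[OF f1] lin_compH[OF f2]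
  define \<Phi> where "\<Phi> h1 t w = (\<Sum>(s1,s2)\<leftarrow>Delta (S h1). \<Sum>(t1,t2)\<leftarrow>Delta t. \<Sum>(w1,w2)\<leftarrow>Delta w.
      F (mult (mult s1 t1) (S w2)) (mult (mult s2 t2) (S w1)))" for h1 t w
  have A1: "(\<Sum>(t,w)\<leftarrow>Delta k. \<Phi> h1 t w) = (\<Sum>(s1,s2)\<leftarrow>Delta (S h1). F s1 s2) * eps k" for h1 k
  proof -
    have "(\<Sum>(t,w)\<leftarrow>Delta k. \<Phi> h1 t w) = (\<Sum>(s1,s2)\<leftarrow>Delta (S h1). \<Sum>(t,w)\<leftarrow>Delta k. \<Sum>(t1,t2)\<leftarrow>Delta t. \<Sum>(w1,w2)\<leftarrow>Delta w.
      F (mult s1 (mult t1 (S w2))) (mult s2 (mult t2 (S w1))))"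
      unfolding \<Phi>_def by (simp add: sum2_swap[where A="Delta k"] mult_assoc)
    also have "\<dots> = (\<Sum>(s1,s2)\<leftarrow>Delta (S h1). eps k * F (mult s1 one) (mult s2 one))"
      by (intro sum2_cong GA) (intro linI L)+
    finally show ?thesis by (simp add: cmul_sum2 mult.commute)
  qed
  have QA: "(\<Sum>(h1,k)\<leftarrow>Delta h. \<Sum>(t,w)\<leftarrow>Delta k. \<Phi> h1 t w) = (\<Sum>(p,q)\<leftarrow>Delta (S h). F p q)"
    unfolding A1 by (rule counitR) (intro linI f1 f2)
  have B0: "(\<Sum>(h1,k)\<leftarrow>Delta h. \<Sum>(t,w)\<leftarrow>Delta k. \<Phi> h1 t w) = (\<Sum>(j,w)\<leftarrow>Delta h. \<Sum>(h1,t)\<leftarrow>Delta j. \<Phi> h1 t w)"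
    unfolding \<Phi>_def by (rule coassoc[symmetric]) (intro linI L)+
  have B1: "(\<Sum>(h1,t)\<leftarrow>Delta j. \<Phi> h1 t w) = eps j * (\<Sum>(w1,w2)\<leftarrow>Delta w. F (S w2) (S w1))" for j w
  proof -
    have "(\<Sum>(h1,t)\<leftarrow>Delta j. \<Phi> h1 t w) = (\<Sum>(w1,w2)\<leftarrow>Delta w. \<Sum>(h1,t)\<leftarrow>Delta j. \<Sum>(s1,s2)\<leftarrow>Delta (S h1). \<Sum>(t1,t2)\<leftarrow>Delta t.
      F (mult (mult s1 t1) (S w2)) (mult (mult s2 t2) (S w1)))"
      unfolding \<Phi>_def by (rule pull3)
    also have "\<dots> = (\<Sum>(w1,w2)\<leftarrow>Delta w. eps j * F (mult one (S w2)) (mult one (S w1)))"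
      by (intro sum2_cong GB) (intro linI L)+
    finally show ?thesis by (simp add: cmul_sum2)
  qed
  have "(\<Sum>(p,q)\<leftarrow>Delta (S h). F p q) = (\<Sum>(j,w)\<leftarrow>Delta h. eps j * (\<Sum>(w1,w2)\<leftarrow>Delta w. F (S w2) (S w1)))"
    using QA B0 B1 by simp
  also have "\<dots> = (\<Sum>(w1,w2)\<leftarrow>Delta h. F (S w2) (S w1))"
    by (rule counitL) (intro linI L)
  finally show ?thesis .
qed

lemma Delta_T:
  assumes f1: "\<And>b. lin sc (\<lambda>a. F a b)" and f2: "\<And>a. lin sc (\<lambda>b. F a b)"
  shows "(\<Sum>(p,q)\<leftarrow>Delta (T x). F p q) = (\<Sum>(p,q)\<leftarrow>Delta x. F (T q) (T p))"
proof -
  note L = lin_compH[OF f1] lin_compH[OF f2]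
  have "(\<Sum>(p,q)\<leftarrow>Delta x. F (T q) (T p)) = (\<Sum>(p,q)\<leftarrow>Delta (S (T x)). F (T q) (T p))" by simp
  also have "\<dots> = (\<Sum>(p,q)\<leftarrow>Delta (T x). F (T (S p)) (T (S q)))"
    by (rule Delta_S) (intro linI L)+
  finally show ?thesis by simp
qed

end


locale cqtL = hopfL sc mult one Delta eps S
  for sc :: "'k::field \<Rightarrow> 'h::ab_group_add \<Rightarrow> 'h" and mult one Delta eps S +
  fixes \<sigma> :: "'h \<Rightarrow> 'h \<Rightarrow> 'k"
  assumes sig: "cqt sc mult one Delta eps \<sigma>"
begin

lemmas SA = sig[unfolded cqt_def]

lemma sig_lin1: "lin sc (\<lambda>h. \<sigma> h y)" using SA unfolding bil_def by simp
lemma sig_lin2: "lin sc (\<lambda>h. \<sigma> a h)" using SA unfolding bil_def by simp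
lemma sig_mult1: "\<sigma> (mult h h') g = (\<Sum>(g1,g2)\<leftarrow>Delta g. \<sigma> h g1 * \<sigma> h' g2)" using SA by simp
lemma sig_mult2: "\<sigma> g (mult h h') = (\<Sum>(g1,g2)\<leftarrow>Delta g. \<sigma> g2 h * \<sigma> g1 h')" using SA by simp
lemma sig_one1[simp]: "\<sigma> one h = eps h" using SA by simp
lemma sig_one2[simp]: "\<sigma> h one = eps h" using SA by simp
lemma cqt_rel: "(\<Sum>(h1,h2)\<leftarrow>Delta h. \<Sum>(h1',h2')\<leftarrow>Delta h'. sc (\<sigma> h1 h1') (mult h2 h2'))
   = (\<Sum>(h1,h2)\<leftarrow>Delta h. \<Sum>(h1',h2')\<leftarrow>Delta h'. sc (\<sigma> h2 h2') (mult h1' h1))"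
  using SA by simp

lemma sig_linI1[linI]: "linH sc g \<Longrightarrow> lin sc (\<lambda>h. \<sigma> (g h) y)"
  using lin_compH[OF sig_lin1] .
lemma sig_linI2[linI]: "linH sc g \<Longrightarrow> lin sc (\<lambda>h. \<sigma> a (g h))"
  using lin_compH[OF sig_lin2] .

abbreviation l where "l x \<equiv> lfun \<sigma> x"
abbreviation r where "r a \<equiv> rfun \<sigma> a"
abbreviation cv :: "('h \<Rightarrow> 'k) \<Rightarrow> ('h \<Rightarrow> 'k) \<Rightarrow> 'h \<Rightarrow> 'k" where "cv \<equiv> conv Delta"

lemma l_app[simp]: "l x h = \<sigma> h x" by (simp add: lfun_def)
lemma r_app[simp]: "r a h = \<sigma> a h" by (simp add: rfun_def)
lemma cv_def': "cv f g h = (\<Sum>(p,q)\<leftarrow>Delta h. f p * g q)" by (simp add: conv_def)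

lemma lin_l: "lin sc (l x)" using sig_lin1 by (simp add: lfun_def)
lemma lin_r: "lin sc (r a)" using sig_lin2 by (simp add: rfun_def)

lemma lin_cv: "lin sc f \<Longrightarrow> lin sc g \<Longrightarrow> lin sc (cv f g)"
  unfolding conv_def
  by (intro sw_lin lin_mulc lin_cmul) (simp_all add: lin_def)

lemma star:
  "(\<Sum>(a1,a2)\<leftarrow>Delta a. \<Sum>(y1,y2)\<leftarrow>Delta y. \<sigma> a1 y2 * cv (l y1) (r a2) h)
 = (\<Sum>(a1,a2)\<leftarrow>Delta a. \<Sum>(y1,y2)\<leftarrow>Delta y. \<sigma> a2 y1 * cv (r a1) (l y2) h)"
proof -
  have e: "\<sigma> a (\<Sum>(h1,h2)\<leftarrow>Delta h. \<Sum>(h1',h2')\<leftarrow>Delta y. sc (\<sigma> h1 h1') (mult h2 h2'))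
      = \<sigma> a (\<Sum>(h1,h2)\<leftarrow>Delta h. \<Sum>(h1',h2')\<leftarrow>Delta y. sc (\<sigma> h2 h2') (mult h1' h1))"
    by (simp only: cqt_rel)
  have L: "\<sigma> a (\<Sum>(h1,h2)\<leftarrow>Delta h. \<Sum>(h1',h2')\<leftarrow>Delta y. sc (\<sigma> h1 h1') (mult h2 h2'))
     = (\<Sum>(h1,h2)\<leftarrow>Delta h. \<Sum>(y1,y2)\<leftarrow>Delta y. \<Sum>(a1,a2)\<leftarrow>Delta a. \<sigma> a1 y2 * (\<sigma> h1 y1 * \<sigma> a2 h2))"
    apply (simp only: lin_sum2[OF sig_lin2] lin_sc[OF sig_lin2] sig_mult2 cmul_sum2)
    apply (intro sum2_cong)
    apply (simp only: mult.commute mult.left_commute)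
    done
  have R: "\<sigma> a (\<Sum>(h1,h2)\<leftarrow>Delta h. \<Sum>(h1',h2')\<leftarrow>Delta y. sc (\<sigma> h2 h2') (mult h1' h1))
     = (\<Sum>(h1,h2)\<leftarrow>Delta h. \<Sum>(y1,y2)\<leftarrow>Delta y. \<Sum>(a1,a2)\<leftarrow>Delta a. \<sigma> a2 y1 * (\<sigma> a1 h1 * \<sigma> h2 y2))"
    apply (simp only: lin_sum2[OF sig_lin2] lin_sc[OF sig_lin2] sig_mult2 cmul_sum2)
    apply (intro sum2_cong)
    apply (simp only: mult.commute mult.left_commute)
    done
  have L2: "(\<Sum>(h1,h2)\<leftarrow>Delta h. \<Sum>(y1,y2)\<leftarrow>Delta y. \<Sum>(a1,a2)\<leftarrow>Delta a. \<sigma> a1 y2 * (\<sigma> h1 y1 * \<sigma> a2 h2))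
     = (\<Sum>(a1,a2)\<leftarrow>Delta a. \<Sum>(y1,y2)\<leftarrow>Delta y. \<sigma> a1 y2 * cv (l y1) (r a2) h)"
  proof -
    have "(\<Sum>(h1,h2)\<leftarrow>Delta h. \<Sum>(y1,y2)\<leftarrow>Delta y. \<Sum>(a1,a2)\<leftarrow>Delta a. \<sigma> a1 y2 * (\<sigma> h1 y1 * \<sigma> a2 h2))
      = (\<Sum>(a1,a2)\<leftarrow>Delta a. \<Sum>(h1,h2)\<leftarrow>Delta h. \<Sum>(y1,y2)\<leftarrow>Delta y. \<sigma> a1 y2 * (\<sigma> h1 y1 * \<sigma> a2 h2))"
      by (rule pull2)
    also have "\<dots> = (\<Sum>(a1,a2)\<leftarrow>Delta a. \<Sum>(y1,y2)\<leftarrow>Delta y. \<Sum>(h1,h2)\<leftarrow>Delta h. \<sigma> a1 y2 * (\<sigma> h1 y1 * \<sigma> a2 h2))"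
      by (intro sum2_cong) (rule sum2_swap)
    also have "\<dots> = (\<Sum>(a1,a2)\<leftarrow>Delta a. \<Sum>(y1,y2)\<leftarrow>Delta y. \<sigma> a1 y2 * cv (l y1) (r a2) h)"
      by (simp only: cv_def' l_app r_app cmul_sum2)
    finally show ?thesis .
  qed
  have R2: "(\<Sum>(h1,h2)\<leftarrow>Delta h. \<Sum>(y1,y2)\<leftarrow>Delta y. \<Sum>(a1,a2)\<leftarrow>Delta a. \<sigma> a2 y1 * (\<sigma> a1 h1 * \<sigma> h2 y2))
     = (\<Sum>(a1,a2)\<leftarrow>Delta a. \<Sum>(y1,y2)\<leftarrow>Delta y. \<sigma> a2 y1 * cv (r a1) (l y2) h)"
  proof -
    have "(\<Sum>(h1,h2)\<leftarrow>Delta h. \<Sum>(y1,y2)\<leftarrow>Delta y. \<Sum>(a1,a2)\<leftarrow>Delta a. \<sigma> a2 y1 * (\<sigma> a1 h1 * \<sigma> h2 y2))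
      = (\<Sum>(a1,a2)\<leftarrow>Delta a. \<Sum>(h1,h2)\<leftarrow>Delta h. \<Sum>(y1,y2)\<leftarrow>Delta y. \<sigma> a2 y1 * (\<sigma> a1 h1 * \<sigma> h2 y2))"
      by (rule pull2)
    also have "\<dots> = (\<Sum>(a1,a2)\<leftarrow>Delta a. \<Sum>(y1,y2)\<leftarrow>Delta y. \<Sum>(h1,h2)\<leftarrow>Delta h. \<sigma> a2 y1 * (\<sigma> a1 h1 * \<sigma> h2 y2))"
      by (intro sum2_cong) (rule sum2_swap)
    also have "\<dots> = (\<Sum>(a1,a2)\<leftarrow>Delta a. \<Sum>(y1,y2)\<leftarrow>Delta y. \<sigma> a2 y1 * cv (r a1) (l y2) h)"
      by (simp only: cv_def' l_app r_app cmul_sum2)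
    finally show ?thesis .
  qed
  show ?thesis using e L R L2 R2 by simp
qed


lemma lin_cv_r[linI]: "lin sc (\<lambda>a. cv f (r a) h)"
  unfolding cv_def' r_app by (rule lin_suml2, rule lin_cmul, rule sig_lin1)
lemma lin_cv_l2[linI]: "lin sc (\<lambda>y. cv f (l y) h)"
  unfolding cv_def' l_app by (rule lin_suml2, rule lin_cmul, rule sig_lin2)
lemma lin_cv_r1[linI]: "lin sc (\<lambda>a. cv (r a) g h)"
  unfolding cv_def' r_app by (rule lin_suml2, rule lin_mulc, rule sig_lin1)
lemma lin_cv_l1[linI]: "lin sc (\<lambda>y. cv (l y) g h)"
  unfolding cv_def' l_app by (rule lin_suml2, rule lin_mulc, rule sig_lin2)

lemma comm:
  "cv (r a) (l y) h = (\<Sum>(a1,a')\<leftarrow>Delta a. \<Sum>(a2,a3)\<leftarrow>Delta a'. \<Sum>(y1,y')\<leftarrow>Delta y. \<Sum>(y2,y3)\<leftarrow>Delta y'.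
      \<sigma> a3 (S y1) * \<sigma> a1 y3 * cv (l y2) (r a2) h)"
proof -
  note sl = sig_lin1 sig_lin2
  have "(\<Sum>(a1,a')\<leftarrow>Delta a. \<Sum>(a2,a3)\<leftarrow>Delta a'. \<Sum>(y1,y')\<leftarrow>Delta y. \<Sum>(y2,y3)\<leftarrow>Delta y'.
      \<sigma> a3 (S y1) * \<sigma> a1 y3 * cv (l y2) (r a2) h)
    = (\<Sum>(a'',a3)\<leftarrow>Delta a. \<Sum>(a1,a2)\<leftarrow>Delta a''. \<Sum>(y1,y')\<leftarrow>Delta y. \<Sum>(y2,y3)\<leftarrow>Delta y'.
      \<sigma> a3 (S y1) * \<sigma> a1 y3 * cv (l y2) (r a2) h)"
    by (rule coassoc[symmetric]) (intro linI; (intro linI)?)+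
  also have "\<dots> = (\<Sum>(a'',a3)\<leftarrow>Delta a. \<Sum>(y1,y')\<leftarrow>Delta y. \<sigma> a3 (S y1) *
      (\<Sum>(a1,a2)\<leftarrow>Delta a''. \<Sum>(y2,y3)\<leftarrow>Delta y'. \<sigma> a1 y3 * cv (l y2) (r a2) h))"
    by (intro sum2_cong, rule trans[OF sum2_swap]) (simp only: cmul_sum2 mult.assoc)
  also have "\<dots> = (\<Sum>(a'',a3)\<leftarrow>Delta a. \<Sum>(y1,y')\<leftarrow>Delta y. \<sigma> a3 (S y1) *
      (\<Sum>(a1,a2)\<leftarrow>Delta a''. \<Sum>(y2,y3)\<leftarrow>Delta y'. \<sigma> a2 y2 * cv (r a1) (l y3) h))"
    by (intro sum2_cong arg_cong2[where f="(*)"] refl star)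
  also have "\<dots> = (\<Sum>(a'',a3)\<leftarrow>Delta a. \<Sum>(a1,a2)\<leftarrow>Delta a''. \<Sum>(y1,y')\<leftarrow>Delta y. \<Sum>(y2,y3)\<leftarrow>Delta y'.
      \<sigma> a3 (S y1) * (\<sigma> a2 y2 * cv (r a1) (l y3) h))"
    by (intro sum2_cong, simp only: cmul_sum2, rule sum2_swap)
  also have "\<dots> = (\<Sum>(a1,a')\<leftarrow>Delta a. \<Sum>(a2,a3)\<leftarrow>Delta a'. \<Sum>(y1,y')\<leftarrow>Delta y. \<Sum>(y2,y3)\<leftarrow>Delta y'.
      \<sigma> a3 (S y1) * (\<sigma> a2 y2 * cv (r a1) (l y3) h))"
    by (rule coassoc) (intro linI; (intro linI)?)+
  also have "\<dots> = (\<Sum>(a1,a')\<leftarrow>Delta a. \<Sum>(a2,a3)\<leftarrow>Delta a'. \<Sum>(y'',y3)\<leftarrow>Delta y. \<Sum>(y1,y2)\<leftarrow>Delta y''.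
      \<sigma> a3 (S y1) * (\<sigma> a2 y2 * cv (r a1) (l y3) h))"
    by (intro sum2_cong coassoc[symmetric]) (intro linI; (intro linI)?)+
  also have "\<dots> = (\<Sum>(a1,a')\<leftarrow>Delta a. \<Sum>(y'',y3)\<leftarrow>Delta y. cv (r a1) (l y3) h *
      (\<Sum>(a2,a3)\<leftarrow>Delta a'. \<Sum>(y1,y2)\<leftarrow>Delta y''. \<sigma> a3 (S y1) * \<sigma> a2 y2))"
    by (intro sum2_cong, rule trans[OF sum2_swap], intro sum2_cong, simp only: cmul_sum2, intro sum2_cong, simp only: mult_ac)
  also have "\<dots> = (\<Sum>(a1,a')\<leftarrow>Delta a. \<Sum>(y'',y3)\<leftarrow>Delta y. cv (r a1) (l y3) h * (eps y'' * eps a'))"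
  proof (intro sum2_cong arg_cong2[where f="(*)"] refl)
    fix a' y''
    have "(\<Sum>(a2,a3)\<leftarrow>Delta a'. \<Sum>(y1,y2)\<leftarrow>Delta y''. \<sigma> a3 (S y1) * \<sigma> a2 y2)
        = (\<Sum>(y1,y2)\<leftarrow>Delta y''. \<sigma> a' (mult (S y1) y2))"
    by (rule trans[OF sum2_swap], intro sum2_cong, simp only: sig_mult2)
    also have "\<dots> = \<sigma> a' (\<Sum>(y1,y2)\<leftarrow>Delta y''. mult (S y1) y2)"
      by (simp only: lin_sum2[OF sig_lin2])
    also have "\<dots> = eps y'' * eps a'"
      by (simp add: antip1 lin_sc[OF sig_lin2])
    finally show "(\<Sum>(a2,a3)\<leftarrow>Delta a'. \<Sum>(y1,y2)\<leftarrow>Delta y''. \<sigma> a3 (S y1) * \<sigma> a2 y2) = eps y'' * eps a'" .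
  qed
  also have "\<dots> = (\<Sum>(a1,a')\<leftarrow>Delta a. cv (r a1) (l y) h * eps a')"
  proof (intro sum2_cong)
    fix a1 a'
    have "(\<Sum>(y'',y3)\<leftarrow>Delta y. cv (r a1) (l y3) h * (eps y'' * eps a'))
        = (\<Sum>(y'',y3)\<leftarrow>Delta y. eps y'' * cv (r a1) (l y3) h) * eps a'"
      by (simp only: mulc_sum2, intro sum2_cong, simp only: mult_ac)
    also have "\<dots> = cv (r a1) (l y) h * eps a'"
      by (simp only: counitL[OF lin_cv_l2])
    finally show "(\<Sum>(y'',y3)\<leftarrow>Delta y. cv (r a1) (l y3) h * (eps y'' * eps a')) = cv (r a1) (l y) h * eps a'" .
  qed
  also have "\<dots> = cv (r a) (l y) h"
    by (rule counitR) (rule lin_cv_r1)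
  finally show ?thesis by simp
qed


end


context cqtL begin

lemma cv_assoc:
  assumes f: "lin sc f" and g: "lin sc g" and k: "lin sc k"
  shows "cv (cv f g) k = cv f (cv g k)"
proof
  fix h
  have "cv (cv f g) k h = (\<Sum>(p,q)\<leftarrow>Delta h. \<Sum>(p1,p2)\<leftarrow>Delta p. f p1 * g p2 * k q)"
    by (simp only: cv_def' mulc_sum2)
  also have "\<dots> = (\<Sum>(p,q)\<leftarrow>Delta h. \<Sum>(q1,q2)\<leftarrow>Delta q. f p * g q1 * k q2)"
    by (rule coassoc) (intro linI f g k)+
  also have "\<dots> = cv f (cv g k) h"
    by (simp only: cv_def' cmul_sum2 mult.assoc)
  finally show "cv (cv f g) k h = cv f (cv g k) h" .
qed

lemma cv_eps_r: "lin sc f \<Longrightarrow> cv f eps = f"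
  by (rule ext) (simp only: cv_def' counitR)
lemma cv_eps_l: "lin sc f \<Longrightarrow> cv eps f = f"
  by (rule ext) (simp only: cv_def' counitL)

lemma l_mult: "l (mult x y) = cv (l y) (l x)"
  by (rule ext) (simp only: cv_def' l_app sig_mult2 mult.commute)

lemma l_one: "l one = eps" by (rule ext) simp
lemma r_one: "r one = eps" by (rule ext) simp

lemma cv_suml: "cv (\<lambda>h. \<Sum>x\<leftarrow>L. F x h) g = (\<lambda>h. \<Sum>x\<leftarrow>L. cv (F x) g h)"
  by (rule ext) (simp only: cv_def' sum_list_mult_const[symmetric] sum21_swap)
lemma cv_cmul: "cv (\<lambda>h. c * f h) g = (\<lambda>h. c * cv f g h)"
  by (rule ext) (simp only: cv_def' cmul_sum2 mult.assoc)
lemma cv_sumr2: "cv f (\<lambda>h. \<Sum>(p,q)\<leftarrow>L. G p q h) = (\<lambda>h. \<Sum>(p,q)\<leftarrow>L. cv f (G p q) h)"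
  by (rule ext) (simp only: cv_def' cmul_sum2 sum2_swap[where A="Delta _"])
lemma cv_cmulr: "cv f (\<lambda>h. c * g h) = (\<lambda>h. c * cv f g h)"
  by (rule ext) (simp only: cv_def' cmul_sum2 mult.left_commute)

end

locale cqtXA = cqtL sc mult one Delta eps S \<sigma>
  for sc :: "'k::field \<Rightarrow> 'h::ab_group_add \<Rightarrow> 'h" and mult one Delta eps S \<sigma> +
  fixes X A :: "'h set"
  assumes X: "sub_hopf sc mult one Delta S X" and A: "sub_hopf sc mult one Delta S A"
begin

definition rep where "rep Y x = (SOME L. set L \<subseteq> Y \<times> Y \<and> teq2 sc L (Delta x))"

lemma rep_prop: assumes Y: "sub_hopf sc mult one Delta S Y" and x: "x \<in> Y"
  shows "set (rep Y x) \<subseteq> Y \<times> Y \<and> teq2 sc (rep Y x) (Delta x)"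
proof -
  have "\<exists>L. set L \<subseteq> Y \<times> Y \<and> teq2 sc L (Delta x)" using Y x unfolding sub_hopf_def by blast
  then show ?thesis unfolding rep_def by (rule someI_ex)
qed

lemma rep_sum: assumes Y: "sub_hopf sc mult one Delta S Y" and x: "x \<in> Y"
  and f1: "\<And>b. lin sc (\<lambda>a. F a b)" and f2: "\<And>a. lin sc (\<lambda>b. F a b)"
  shows "(\<Sum>(p,q)\<leftarrow>rep Y x. F p q) = (\<Sum>(p,q)\<leftarrow>Delta x. F p q)"
  using teq2_sum[OF conjunct2[OF rep_prop[OF Y x]] f1 f2] .

lemma rep_mem: assumes Y: "sub_hopf sc mult one Delta S Y" and x: "x \<in> Y" and "(p,q) \<in> set (rep Y x)"
  shows "p \<in> Y" "q \<in> Y"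
  using rep_prop[OF Y x] assms(3) by auto

lemma subh_mult: "sub_hopf sc mult one Delta S Y \<Longrightarrow> a \<in> Y \<Longrightarrow> b \<in> Y \<Longrightarrow> mult a b \<in> Y"
  unfolding sub_hopf_def by blast
lemma subh_one: "sub_hopf sc mult one Delta S Y \<Longrightarrow> one \<in> Y"
  unfolding sub_hopf_def by blast
lemma subh_S: "sub_hopf sc mult one Delta S Y \<Longrightarrow> a \<in> Y \<Longrightarrow> S a \<in> Y"
  unfolding sub_hopf_def by blast
lemma subh_T: assumes "sub_hopf sc mult one Delta S Y" "a \<in> Y" shows "T a \<in> Y"
proof -
  have "S ` Y = Y" using assms(1) unfolding sub_hopf_def by blast
  then obtain b where "b \<in> Y" "a = S b" using assms(2) by blast
  then show ?thesis by simp
qed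

abbreviation U where "U \<equiv> HXA Delta \<sigma> X A"

lemma U_iff: "f \<in> U \<longleftrightarrow> (\<exists>L. (\<forall>(c,x,a)\<in>set L. x \<in> X \<and> a \<in> A) \<and> f = (\<lambda>h. \<Sum>(c,x,a)\<leftarrow>L. c * cv (l x) (r a) h))"
  unfolding HXA_def by simp

lemma lin_lr: "lin sc (cv (l x) (r a))" by (intro lin_cv lin_l lin_r)

lemma U_lin: assumes "f \<in> U" shows "lin sc f"
proof -
  obtain L where f: "f = (\<lambda>h. \<Sum>(c,x,a)\<leftarrow>L. c * cv (l x) (r a) h)" using assms U_iff by blast
  have "lin sc (\<lambda>h. \<Sum>t\<leftarrow>L. (case t of (c,x,a) \<Rightarrow> c * cv (l x) (r a) h))"
    by (rule lin_suml) (auto split: prod.splits intro!: lin_cmul lin_lr)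
  then show ?thesis unfolding f by (simp add: case_prod_beta')
qed

lemma U_zero: "(\<lambda>h. 0) \<in> U"
  unfolding U_iff by (rule exI[of _ "[]"]) simp

lemma U_add: assumes "f \<in> U" "g \<in> U" shows "(\<lambda>h. f h + g h) \<in> U"
proof -
  obtain L where L: "\<forall>(c,x,a)\<in>set L. x \<in> X \<and> a \<in> A" "f = (\<lambda>h. \<Sum>(c,x,a)\<leftarrow>L. c * cv (l x) (r a) h)"
    using assms(1) U_iff by blast
  obtain M where M: "\<forall>(c,x,a)\<in>set M. x \<in> X \<and> a \<in> A" "g = (\<lambda>h. \<Sum>(c,x,a)\<leftarrow>M. c * cv (l x) (r a) h)"
    using assms(2) U_iff by blast
  show ?thesis unfolding U_iff
    by (rule exI[of _ "L @ M"]) (use L M in auto)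
qed

lemma U_cmul: assumes "f \<in> U" shows "(\<lambda>h. c * f h) \<in> U"
proof -
  obtain L where L: "\<forall>(c,x,a)\<in>set L. x \<in> X \<and> a \<in> A" "f = (\<lambda>h. \<Sum>(c,x,a)\<leftarrow>L. c * cv (l x) (r a) h)"
    using assms(1) U_iff by blast
  have e: "c * (\<Sum>(c',x,a)\<leftarrow>L. c' * cv (l x) (r a) h) = (\<Sum>(c',x,a)\<leftarrow>map (\<lambda>(c',x,a). (c * c', x, a)) L. c' * cv (l x) (r a) h)" for h
    by (induction L) (auto simp: algebra_simps)
  show ?thesis unfolding U_iff
    by (rule exI[of _ "map (\<lambda>(c',x,a). (c * c', x, a)) L"]) (use L e in auto)
qed

lemma U_sum: "(\<And>i. i \<in> set L \<Longrightarrow> F i \<in> U) \<Longrightarrow> (\<lambda>h. \<Sum>i\<leftarrow>L. F i h) \<in> U"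
proof (induction L)
  case Nil then show ?case using U_zero by simp
next
  case (Cons a L)
  then show ?case using U_add[of "F a" "\<lambda>h. \<Sum>i\<leftarrow>L. F i h"] by simp
qed

lemma U_sum2: "(\<And>p q. (p,q) \<in> set L \<Longrightarrow> G p q \<in> U) \<Longrightarrow> (\<lambda>h. \<Sum>(p,q)\<leftarrow>L. G p q h) \<in> U"
  using U_sum[of L "\<lambda>(p,q). G p q"] by (auto simp: case_prod_beta')

lemma U_lr: "x \<in> X \<Longrightarrow> a \<in> A \<Longrightarrow> cv (l x) (r a) \<in> U"
  unfolding U_iff by (rule exI[of _ "[(1,x,a)]"]) auto

lemma U_l: "x \<in> X \<Longrightarrow> l x \<in> U"
  using U_lr[of x one] subh_one[OF A] by (simp add: r_one cv_eps_r lin_l)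

end


context cqtXA begin

lemma rep_sum_cong:
  assumes Y: "sub_hopf sc mult one Delta S Y" and x: "x \<in> Y"
  and g1: "\<And>b. lin sc (\<lambda>a. G a b)" and g2: "\<And>a. lin sc (\<lambda>b. G a b)"
  and c: "\<And>p q. p \<in> Y \<Longrightarrow> q \<in> Y \<Longrightarrow> F p q = G p q"
  shows "(\<Sum>(p,q)\<leftarrow>rep Y x. F p q) = (\<Sum>(p,q)\<leftarrow>Delta x. G p q)"
proof -
  have "(\<Sum>(p,q)\<leftarrow>rep Y x. F p q) = (\<Sum>(p,q)\<leftarrow>rep Y x. G p q)"
    by (rule sum2_cong) (use rep_mem[OF Y x] c in blast)
  also have "\<dots> = (\<Sum>(p,q)\<leftarrow>Delta x. G p q)" by (rule rep_sum[OF Y x g1 g2])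
  finally show ?thesis .
qed

lemma rcomm:
  assumes a: "a \<in> A" and w: "w \<in> X"
  shows "cv (r a) (l w) = (\<lambda>h. \<Sum>(a1,a')\<leftarrow>rep A a. \<Sum>(a2,a3)\<leftarrow>rep A a'. \<Sum>(y1,y')\<leftarrow>rep X w. \<Sum>(y2,y3)\<leftarrow>rep X y'.
      \<sigma> a3 (S y1) * \<sigma> a1 y3 * cv (l y2) (r a2) h)"
proof
  fix h
  note sl = sig_lin1 sig_lin2
  have "(\<Sum>(a1,a')\<leftarrow>rep A a. \<Sum>(a2,a3)\<leftarrow>rep A a'. \<Sum>(y1,y')\<leftarrow>rep X w. \<Sum>(y2,y3)\<leftarrow>rep X y'.
      \<sigma> a3 (S y1) * \<sigma> a1 y3 * cv (l y2) (r a2) h)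
    = (\<Sum>(a1,a')\<leftarrow>Delta a. \<Sum>(a2,a3)\<leftarrow>Delta a'. \<Sum>(y1,y')\<leftarrow>Delta w. \<Sum>(y2,y3)\<leftarrow>Delta y'.
      \<sigma> a3 (S y1) * \<sigma> a1 y3 * cv (l y2) (r a2) h)"
    apply (rule rep_sum_cong[OF A a])
      apply ((intro linI; (intro linI)?)+)[2]
    apply (rule rep_sum_cong[OF A], assumption)
      apply ((intro linI; (intro linI)?)+)[2]
    apply (rule rep_sum_cong[OF X w])
      apply ((intro linI; (intro linI)?)+)[2]
    apply (rule rep_sum_cong[OF X], assumption)
      apply ((intro linI; (intro linI)?)+)[2]
    apply (rule refl)
    done
  then show "cv (r a) (l w) h = (\<lambda>h. \<Sum>(a1,a')\<leftarrow>rep A a. \<Sum>(a2,a3)\<leftarrow>rep A a'. \<Sum>(y1,y')\<leftarrow>rep X w. \<Sum>(y2,y3)\<leftarrow>rep X y'.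
      \<sigma> a3 (S y1) * \<sigma> a1 y3 * cv (l y2) (r a2) h) h"
    using comm by simp
qed

lemma sum2_zero[simp]: "(\<Sum>(p,q)\<leftarrow>L. (0::'a::monoid_add)) = 0"
  by (induction L) auto

lemma U_lr': "x \<in> X \<Longrightarrow> a \<in> A \<Longrightarrow> cv (\<lambda>h. \<sigma> h x) (\<sigma> a) \<in> U"
  using U_lr[of x a] by (simp add: lfun_def rfun_def)

lemma cv_sum3: "cv (\<lambda>h. \<Sum>(c,x,a)\<leftarrow>L. c * F x a h) g = (\<lambda>h. \<Sum>(c,x,a)\<leftarrow>L. c * cv (F x a) g h)"
proof
  fix h show "cv (\<lambda>h. \<Sum>(c,x,a)\<leftarrow>L. c * F x a h) g h = (\<Sum>(c,x,a)\<leftarrow>L. c * cv (F x a) g h)"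
    by (induction L) (auto simp: cv_def' sum2_add distrib_right cmul_sum2 mult.assoc)
qed

lemma memA: "a \<in> A \<Longrightarrow> (p,q) \<in> set (rep A a) \<Longrightarrow> p \<in> A \<and> q \<in> A"
  using rep_mem[OF A] by blast
lemma memX: "x \<in> X \<Longrightarrow> (p,q) \<in> set (rep X x) \<Longrightarrow> p \<in> X \<and> q \<in> X"
  using rep_mem[OF X] by blast

lemma U_basic:
  assumes x: "x \<in> X" and a: "a \<in> A" and w: "w \<in> X"
  shows "cv (cv (l x) (r a)) (l w) \<in> U"
proof -
  have "cv (cv (l x) (r a)) (l w) = cv (l x) (cv (r a) (l w))"
    by (rule cv_assoc) (rule lin_l lin_r)+
  also have "\<dots> = (\<lambda>h. \<Sum>(a1,a')\<leftarrow>rep A a. \<Sum>(a2,a3)\<leftarrow>rep A a'. \<Sum>(y1,y')\<leftarrow>rep X w. \<Sum>(y2,y3)\<leftarrow>rep X y'.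
      \<sigma> a3 (S y1) * \<sigma> a1 y3 * cv (l x) (cv (l y2) (r a2)) h)"
    by (simp only: rcomm[OF a w] cv_sumr2 cv_cmulr)
  also have "\<dots> = (\<lambda>h. \<Sum>(a1,a')\<leftarrow>rep A a. \<Sum>(a2,a3)\<leftarrow>rep A a'. \<Sum>(y1,y')\<leftarrow>rep X w. \<Sum>(y2,y3)\<leftarrow>rep X y'.
      \<sigma> a3 (S y1) * \<sigma> a1 y3 * cv (l (mult y2 x)) (r a2) h)"
    by (simp only: l_mult cv_assoc[OF lin_l lin_l lin_r])
  finally have e: "cv (cv (l x) (r a)) (l w) = \<dots>" .
  show ?thesis unfolding e
    apply (intro U_sum2 U_cmul U_lr)
    using x a w by (meson memA memX subh_mult[OF X])+
qed

lemma U_cvl: assumes f: "f \<in> U" and w: "w \<in> X" shows "cv f (l w) \<in> U"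
proof -
  obtain L where L: "\<forall>(c,x,a)\<in>set L. x \<in> X \<and> a \<in> A" "f = (\<lambda>h. \<Sum>(c,x,a)\<leftarrow>L. c * cv (l x) (r a) h)"
    using f U_iff by blast
  have e: "cv f (l w) = (\<lambda>h. \<Sum>(c,x,a)\<leftarrow>L. c * cv (cv (l x) (r a)) (l w) h)"
    unfolding L(2) by (rule cv_sum3)
  have "(\<lambda>h. \<Sum>t\<leftarrow>L. (case t of (c,x,a) \<Rightarrow> (\<lambda>h. c * cv (cv (l x) (r a)) (l w) h)) h) \<in> U"
    by (rule U_sum) (use L(1) in \<open>auto intro!: U_cmul U_basic w\<close>)
  then show ?thesis unfolding e by (simp add: case_prod_beta')
qed

lemma lr_mult: "cv (l x) (r a) (mult u v) = (\<Sum>(x1,x2)\<leftarrow>Delta x. \<Sum>(a1,a2)\<leftarrow>Delta a. cv (l x1) (r a2) u * cv (l x2) (r a1) v)"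
proof -
  have "cv (l x) (r a) (mult u v) = (\<Sum>(u1,u2)\<leftarrow>Delta u. \<Sum>(v1,v2)\<leftarrow>Delta v. \<sigma> (mult u1 v1) x * \<sigma> a (mult u2 v2))"
    unfolding cv_def' l_app r_app by (rule multD) (intro linI)+
  also have "\<dots> = (\<Sum>(u1,u2)\<leftarrow>Delta u. \<Sum>(v1,v2)\<leftarrow>Delta v. \<Sum>(x1,x2)\<leftarrow>Delta x. \<Sum>(a1,a2)\<leftarrow>Delta a.
       \<sigma> u1 x1 * \<sigma> v1 x2 * (\<sigma> a2 u2 * \<sigma> a1 v2))"
    by (simp only: sig_mult1 sig_mult2 mulc_sum2 cmul_sum2, intro sum2_cong, rule sum2_swap)
  also have "\<dots> = (\<Sum>(x1,x2)\<leftarrow>Delta x. \<Sum>(a1,a2)\<leftarrow>Delta a. \<Sum>(u1,u2)\<leftarrow>Delta u. \<Sum>(v1,v2)\<leftarrow>Delta v.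
       \<sigma> u1 x1 * \<sigma> v1 x2 * (\<sigma> a2 u2 * \<sigma> a1 v2))"
  proof -
    have "(\<Sum>(x1,x2)\<leftarrow>Delta x. \<Sum>(a1,a2)\<leftarrow>Delta a. \<Sum>(u1,u2)\<leftarrow>Delta u. \<Sum>(v1,v2)\<leftarrow>Delta v.
       \<sigma> u1 x1 * \<sigma> v1 x2 * (\<sigma> a2 u2 * \<sigma> a1 v2))
      = (\<Sum>(u1,u2)\<leftarrow>Delta u. \<Sum>(x1,x2)\<leftarrow>Delta x. \<Sum>(a1,a2)\<leftarrow>Delta a. \<Sum>(v1,v2)\<leftarrow>Delta v.
       \<sigma> u1 x1 * \<sigma> v1 x2 * (\<sigma> a2 u2 * \<sigma> a1 v2))"
      by (rule pull2)
    also have "\<dots> = (\<Sum>(u1,u2)\<leftarrow>Delta u. \<Sum>(v1,v2)\<leftarrow>Delta v. \<Sum>(x1,x2)\<leftarrow>Delta x. \<Sum>(a1,a2)\<leftarrow>Delta a.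
       \<sigma> u1 x1 * \<sigma> v1 x2 * (\<sigma> a2 u2 * \<sigma> a1 v2))"
      by (intro sum2_cong) (rule pull2)
    finally show ?thesis by simp
  qed
  also have "\<dots> = (\<Sum>(x1,x2)\<leftarrow>Delta x. \<Sum>(a1,a2)\<leftarrow>Delta a. cv (l x1) (r a2) u * cv (l x2) (r a1) v)"
    by (simp only: cv_def' l_app r_app mulc_sum2 cmul_sum2, intro sum2_cong, rule trans[OF sum2_swap], intro sum2_cong, simp only: mult_ac)
  finally show ?thesis .
qed

lemma sumM: "(\<Sum>(g,g')\<leftarrow>concat (map (\<lambda>(c,x,a). concat (map (\<lambda>(x1,x2). map (\<lambda>(a1,a2). (P c x1 a2, Q x2 a1)) (RA a)) (RX x))) L). g u * g' v)
   = (\<Sum>(c,x,a)\<leftarrow>L. \<Sum>(x1,x2)\<leftarrow>RX x. \<Sum>(a1,a2)\<leftarrow>RA a. P c x1 a2 u * Q x2 a1 v)"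
  by (induction L) auto

lemma DeltaU_ex: assumes f: "f \<in> U"
  shows "\<exists>M. set M \<subseteq> U \<times> U \<and> (\<forall>u v. (\<Sum>(g,g')\<leftarrow>M. g u * g' v) = f (mult u v))"
proof -
  obtain L where L: "\<forall>(c,x,a)\<in>set L. x \<in> X \<and> a \<in> A" "f = (\<lambda>h. \<Sum>(c,x,a)\<leftarrow>L. c * cv (l x) (r a) h)"
    using f U_iff by blast
  define M where "M = concat (map (\<lambda>(c,x,a). concat (map (\<lambda>(x1,x2). map (\<lambda>(a1,a2).
     ((\<lambda>h. c * cv (l x1) (r a2) h), cv (l x2) (r a1))) (rep A a)) (rep X x))) L)"
  have s: "set M \<subseteq> U \<times> U"
    unfolding M_def using L(1) by (auto intro!: U_cmul U_lr U_lr' dest: memA memX)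
  have e: "(\<Sum>(g,g')\<leftarrow>M. g u * g' v) = f (mult u v)" for u v
  proof -
    have "(\<Sum>(g,g')\<leftarrow>M. g u * g' v) = (\<Sum>(c,x,a)\<leftarrow>L. \<Sum>(x1,x2)\<leftarrow>rep X x. \<Sum>(a1,a2)\<leftarrow>rep A a.
        c * cv (l x1) (r a2) u * cv (l x2) (r a1) v)"
      unfolding M_def by (rule sumM)
    also have "\<dots> = (\<Sum>(c,x,a)\<leftarrow>L. c * cv (l x) (r a) (mult u v))"
    proof -
      have "(\<Sum>(x1,x2)\<leftarrow>rep X x. \<Sum>(a1,a2)\<leftarrow>rep A a. c * cv (l x1) (r a2) u * cv (l x2) (r a1) v)
          = c * cv (l x) (r a) (mult u v)" if "x \<in> X" "a \<in> A" for c x a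
      proof -
        have "(\<Sum>(x1,x2)\<leftarrow>rep X x. \<Sum>(a1,a2)\<leftarrow>rep A a. c * cv (l x1) (r a2) u * cv (l x2) (r a1) v)
          = (\<Sum>(x1,x2)\<leftarrow>Delta x. \<Sum>(a1,a2)\<leftarrow>Delta a. c * cv (l x1) (r a2) u * cv (l x2) (r a1) v)"
          apply (rule rep_sum_cong[OF X that(1)])
            apply ((intro linI; (intro linI)?)+)[2]
          apply (rule rep_sum_cong[OF A that(2)])
            apply ((intro linI; (intro linI)?)+)[2]
          apply (rule refl)
          done
        then show ?thesis by (simp only: lr_mult cmul_sum2 mult.assoc)
      qed
      then show ?thesis using L(1)
        by (induction L) auto
    qed
    also have "\<dots> = f (mult u v)" unfolding L(2) by simp
    finally show ?thesis .
  qed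
  show ?thesis using s e by blast
qed

lemma DeltaU_prop: assumes "f \<in> U"
  shows "set (DeltaU mult U f) \<subseteq> U \<times> U \<and> (\<forall>u v. (\<Sum>(g,g')\<leftarrow>DeltaU mult U f. g u * g' v) = f (mult u v))"
  unfolding DeltaU_def using someI_ex[OF DeltaU_ex[OF assms]] by simp

end


context cqtL begin

lemma R4:
  assumes "\<And>b c d. lin sc (\<lambda>a. F a b c d)" "\<And>a c d. lin sc (\<lambda>b. F a b c d)"
          "\<And>a b d. lin sc (\<lambda>c. F a b c d)" "\<And>a b c. lin sc (\<lambda>d. F a b c d)"
  shows "(\<Sum>(h',h4)\<leftarrow>Delta h. \<Sum>(a,b)\<leftarrow>Delta h'. \<Sum>(c,d)\<leftarrow>Delta h4. F a b c d)
       = (\<Sum>(a,e)\<leftarrow>Delta h. \<Sum>(f,d)\<leftarrow>Delta e. \<Sum>(b,c)\<leftarrow>Delta f. F a b c d)"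
proof -
  have "(\<Sum>(h',h4)\<leftarrow>Delta h. \<Sum>(a,b)\<leftarrow>Delta h'. \<Sum>(c,d)\<leftarrow>Delta h4. F a b c d)
      = (\<Sum>(a,e)\<leftarrow>Delta h. \<Sum>(b,h4)\<leftarrow>Delta e. \<Sum>(c,d)\<leftarrow>Delta h4. F a b c d)"
    by (rule coassoc) (intro linI assms)+
  also have "\<dots> = (\<Sum>(a,e)\<leftarrow>Delta h. \<Sum>(f,d)\<leftarrow>Delta e. \<Sum>(b,c)\<leftarrow>Delta f. F a b c d)"
    by (intro sum2_cong coassoc[symmetric]) (intro linI assms)+
  finally show ?thesis .
qed

lemma KI:
  assumes n: "lin sc n"
  shows "(\<Sum>(b,c)\<leftarrow>Delta u. \<Sum>(x1,q)\<leftarrow>Delta x. \<Sum>(x2,x3)\<leftarrow>Delta q. n (mult (mult (T x3) b) x1) * \<sigma> c (T x2))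
       = (\<Sum>(b,c)\<leftarrow>Delta u. \<sigma> b (T x) * n c)"
proof -
  note ln = lin_compH[OF n]
  have step: "(\<Sum>(x2,x3)\<leftarrow>Delta q. \<Sum>(b,c)\<leftarrow>Delta u. n (mult (mult (T x3) b) x1) * \<sigma> c (T x2))
      = (\<Sum>(b,c)\<leftarrow>Delta u. \<Sum>(x2,x3)\<leftarrow>Delta q. \<sigma> b (T x3) * n (mult (mult c (T x2)) x1))" for q x1
  proof -
    have "(\<Sum>(x2,x3)\<leftarrow>Delta q. \<Sum>(b,c)\<leftarrow>Delta u. n (mult (mult (T x3) b) x1) * \<sigma> c (T x2))
        = (\<Sum>(g1,g2)\<leftarrow>Delta (T q). \<Sum>(b,c)\<leftarrow>Delta u. n (mult (mult g1 b) x1) * \<sigma> c g2)"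
      by (rule Delta_T[symmetric]) (intro linI ln)+
    also have "\<dots> = n (mult (\<Sum>(b,c)\<leftarrow>Delta u. \<Sum>(g1,g2)\<leftarrow>Delta (T q). sc (\<sigma> c g2) (mult g1 b)) x1)"
      by (simp only: mult_suml2 lin_sum2[OF n] mult_scl lin_sc[OF n] mult.commute[of "\<sigma> _ _"] sum2_swap[where A="Delta (T q)"])
    also have "\<dots> = n (mult (\<Sum>(b,c)\<leftarrow>Delta u. \<Sum>(g1,g2)\<leftarrow>Delta (T q). sc (\<sigma> b g1) (mult c g2)) x1)"
      by (simp only: cqt_rel)
    also have "\<dots> = (\<Sum>(b,c)\<leftarrow>Delta u. \<Sum>(g1,g2)\<leftarrow>Delta (T q). \<sigma> b g1 * n (mult (mult c g2) x1))"
      by (simp only: mult_suml2 lin_sum2[OF n] mult_scl lin_sc[OF n])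
    also have "\<dots> = (\<Sum>(b,c)\<leftarrow>Delta u. \<Sum>(x2,x3)\<leftarrow>Delta q. \<sigma> b (T x3) * n (mult (mult c (T x2)) x1))"
      by (intro sum2_cong Delta_T) (intro linI ln)+
    finally show ?thesis .
  qed
  have "(\<Sum>(b,c)\<leftarrow>Delta u. \<Sum>(x1,q)\<leftarrow>Delta x. \<Sum>(x2,x3)\<leftarrow>Delta q. n (mult (mult (T x3) b) x1) * \<sigma> c (T x2))
      = (\<Sum>(x1,q)\<leftarrow>Delta x. \<Sum>(x2,x3)\<leftarrow>Delta q. \<Sum>(b,c)\<leftarrow>Delta u. n (mult (mult (T x3) b) x1) * \<sigma> c (T x2))"
    by (rule pull2[symmetric])
  also have "\<dots> = (\<Sum>(x1,q)\<leftarrow>Delta x. \<Sum>(b,c)\<leftarrow>Delta u. \<Sum>(x2,x3)\<leftarrow>Delta q. \<sigma> b (T x3) * n (mult (mult c (T x2)) x1))"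
    by (intro sum2_cong step)
  also have "\<dots> = (\<Sum>(b,c)\<leftarrow>Delta u. \<Sum>(x1,q)\<leftarrow>Delta x. \<Sum>(x2,x3)\<leftarrow>Delta q. \<sigma> b (T x3) * n (mult (mult c (T x2)) x1))"
    by (rule sum2_swap)
  also have "\<dots> = (\<Sum>(b,c)\<leftarrow>Delta u. \<Sum>(p,x3)\<leftarrow>Delta x. \<Sum>(x1,x2)\<leftarrow>Delta p. \<sigma> b (T x3) * n (mult (mult c (T x2)) x1))"
    by (intro sum2_cong coassoc[symmetric]) (intro linI ln)+
  also have "\<dots> = (\<Sum>(b,c)\<leftarrow>Delta u. \<Sum>(p,x3)\<leftarrow>Delta x. eps p * (\<sigma> b (T x3) * n c))"
  proof (intro sum2_cong)
    fix b c p x3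
    have "(\<Sum>(x1,x2)\<leftarrow>Delta p. \<sigma> b (T x3) * n (mult (mult c (T x2)) x1))
        = \<sigma> b (T x3) * n (mult c (\<Sum>(x1,x2)\<leftarrow>Delta p. mult (T x2) x1))"
      by (simp only: mult_sumr2 lin_sum2[OF n] cmul_sum2 mult_assoc)
    also have "\<dots> = eps p * (\<sigma> b (T x3) * n c)"
      by (simp add: T_antip mult_scr lin_sc[OF n])
    finally show "(\<Sum>(x1,x2)\<leftarrow>Delta p. \<sigma> b (T x3) * n (mult (mult c (T x2)) x1)) = eps p * (\<sigma> b (T x3) * n c)" .
  qed
  also have "\<dots> = (\<Sum>(b,c)\<leftarrow>Delta u. \<sigma> b (T x) * n c)"
    by (intro sum2_cong counitL) (intro linI)
  finally show ?thesis .
qed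

end


context cqtXA begin

abbreviation DU where "DU f \<equiv> DeltaU mult U f"

lemma col_leaf: assumes n: "n \<in> U"
  shows "(\<Sum>(p,n3)\<leftarrow>DU n. \<Sum>(n1,n2)\<leftarrow>DU p. n3 x1 * n1 (T x3) * (m h1 * n2 h2 * (\<sigma> g2 (T y) * \<sigma> g1 (T x2))))
     = m h1 * (\<sigma> g2 (T y) * \<sigma> g1 (T x2)) * n (mult (mult (T x3) h2) x1)"
proof -
  let ?K = "m h1 * (\<sigma> g2 (T y) * \<sigma> g1 (T x2))"
  have "(\<Sum>(p,n3)\<leftarrow>DU n. \<Sum>(n1,n2)\<leftarrow>DU p. n3 x1 * n1 (T x3) * (m h1 * n2 h2 * (\<sigma> g2 (T y) * \<sigma> g1 (T x2))))
      = (\<Sum>(p,n3)\<leftarrow>DU n. ?K * n3 x1 * (\<Sum>(n1,n2)\<leftarrow>DU p. n1 (T x3) * n2 h2))"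
    by (simp only: cmul_sum2, intro sum2_cong, simp only: mult_ac)
  also have "\<dots> = (\<Sum>(p,n3)\<leftarrow>DU n. ?K * (p (mult (T x3) h2) * n3 x1))"
  proof (rule sum2_cong)
    fix p n3 assume "(p,n3) \<in> set (DU n)"
    then have "p \<in> U" using DeltaU_prop[OF n] by auto
    then have e: "(\<Sum>(n1,n2)\<leftarrow>DU p. n1 (T x3) * n2 h2) = p (mult (T x3) h2)"
      using DeltaU_prop[of p] by simp
    show "?K * n3 x1 * (\<Sum>(n1,n2)\<leftarrow>DU p. n1 (T x3) * n2 h2) = ?K * (p (mult (T x3) h2) * n3 x1)"
      unfolding e by (simp only: mult_ac)
  qed
  also have "\<dots> = ?K * n (mult (mult (T x3) h2) x1)"
    using DeltaU_prop[OF n] by (simp add: cmul_sum2[symmetric])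
  finally show ?thesis .
qed

lemma S6_leaf: assumes n: "lin sc n"
  shows "(\<Sum>(b,c)\<leftarrow>Delta f. \<Sum>(x1,q)\<leftarrow>Delta x. \<Sum>(x2,x3)\<leftarrow>Delta q. m a * (\<sigma> d (T y) * \<sigma> c (T x2)) * n (mult (mult (T x3) b) x1))
     = (\<Sum>(b,c)\<leftarrow>Delta f. m a * \<sigma> d (T y) * (\<sigma> b (T x) * n c))"
proof -
  have "(\<Sum>(b,c)\<leftarrow>Delta f. \<Sum>(x1,q)\<leftarrow>Delta x. \<Sum>(x2,x3)\<leftarrow>Delta q. m a * (\<sigma> d (T y) * \<sigma> c (T x2)) * n (mult (mult (T x3) b) x1))
     = m a * \<sigma> d (T y) * (\<Sum>(b,c)\<leftarrow>Delta f. \<Sum>(x1,q)\<leftarrow>Delta x. \<Sum>(x2,x3)\<leftarrow>Delta q. n (mult (mult (T x3) b) x1) * \<sigma> c (T x2))"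
    by (simp only: cmul_sum2, intro sum2_cong, simp only: mult_ac)
  also have "\<dots> = m a * \<sigma> d (T y) * (\<Sum>(b,c)\<leftarrow>Delta f. \<sigma> b (T x) * n c)"
    by (simp only: KI[OF n])
  finally show ?thesis by (simp only: cmul_sum2)
qed

lemma KEY:
  assumes m: "m \<in> U" and n: "n \<in> U"
  shows "(\<Sum>(p,n3)\<leftarrow>DU n. \<Sum>(n1,n2)\<leftarrow>DU p. \<Sum>(x1,q)\<leftarrow>Delta x. \<Sum>(x2,x3)\<leftarrow>Delta q.
            cv (\<lambda>h. n3 x1 * n1 (T x3) * cv m n2 h) (l (T (mult x2 y))) h)
       = cv (cv m (l (T x))) (cv n (l (T y))) h"
proof -
  have lm: "lin sc m" by (rule U_lin[OF m])
  have lnn: "lin sc n" by (rule U_lin[OF n])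
  note L = lin_compH[OF lm] lin_compH[OF lnn]
  have E1: "cv (cv m n2) (l (T (mult x2 y))) h = (\<Sum>(h',h4)\<leftarrow>Delta h. \<Sum>(h1,h2)\<leftarrow>Delta h'. \<Sum>(g1,g2)\<leftarrow>Delta h4.
      m h1 * n2 h2 * (\<sigma> g2 (T y) * \<sigma> g1 (T x2)))" for n2 x2
    by (simp only: cv_def' l_app T_mult sig_mult2 mulc_sum2 cmul_sum2, intro sum2_cong, rule sum2_swap)
  have "(\<Sum>(p,n3)\<leftarrow>DU n. \<Sum>(n1,n2)\<leftarrow>DU p. \<Sum>(x1,q)\<leftarrow>Delta x. \<Sum>(x2,x3)\<leftarrow>Delta q.
            cv (\<lambda>h. n3 x1 * n1 (T x3) * cv m n2 h) (l (T (mult x2 y))) h)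
     = (\<Sum>(p,n3)\<leftarrow>DU n. \<Sum>(n1,n2)\<leftarrow>DU p. \<Sum>(x1,q)\<leftarrow>Delta x. \<Sum>(x2,x3)\<leftarrow>Delta q.
         \<Sum>(h',h4)\<leftarrow>Delta h. \<Sum>(h1,h2)\<leftarrow>Delta h'. \<Sum>(g1,g2)\<leftarrow>Delta h4.
         n3 x1 * n1 (T x3) * (m h1 * n2 h2 * (\<sigma> g2 (T y) * \<sigma> g1 (T x2))))"
    by (simp only: cv_cmul E1 cmul_sum2)
  also have "\<dots> = (\<Sum>(x1,q)\<leftarrow>Delta x. \<Sum>(p,n3)\<leftarrow>DU n. \<Sum>(n1,n2)\<leftarrow>DU p. \<Sum>(x2,x3)\<leftarrow>Delta q.
         \<Sum>(h',h4)\<leftarrow>Delta h. \<Sum>(h1,h2)\<leftarrow>Delta h'. \<Sum>(g1,g2)\<leftarrow>Delta h4.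
         n3 x1 * n1 (T x3) * (m h1 * n2 h2 * (\<sigma> g2 (T y) * \<sigma> g1 (T x2))))"
    by (rule pull2)
  also have "\<dots> = (\<Sum>(x1,q)\<leftarrow>Delta x. \<Sum>(x2,x3)\<leftarrow>Delta q. \<Sum>(p,n3)\<leftarrow>DU n. \<Sum>(n1,n2)\<leftarrow>DU p.
         \<Sum>(h',h4)\<leftarrow>Delta h. \<Sum>(h1,h2)\<leftarrow>Delta h'. \<Sum>(g1,g2)\<leftarrow>Delta h4.
         n3 x1 * n1 (T x3) * (m h1 * n2 h2 * (\<sigma> g2 (T y) * \<sigma> g1 (T x2))))"
    by (intro sum2_cong pull2)
  also have "\<dots> = (\<Sum>(x1,q)\<leftarrow>Delta x. \<Sum>(x2,x3)\<leftarrow>Delta q. \<Sum>(h',h4)\<leftarrow>Delta h. \<Sum>(p,n3)\<leftarrow>DU n. \<Sum>(n1,n2)\<leftarrow>DU p.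
         \<Sum>(h1,h2)\<leftarrow>Delta h'. \<Sum>(g1,g2)\<leftarrow>Delta h4.
         n3 x1 * n1 (T x3) * (m h1 * n2 h2 * (\<sigma> g2 (T y) * \<sigma> g1 (T x2))))"
    by (intro sum2_cong pull2)
  also have "\<dots> = (\<Sum>(x1,q)\<leftarrow>Delta x. \<Sum>(x2,x3)\<leftarrow>Delta q. \<Sum>(h',h4)\<leftarrow>Delta h. \<Sum>(h1,h2)\<leftarrow>Delta h'.
         \<Sum>(p,n3)\<leftarrow>DU n. \<Sum>(n1,n2)\<leftarrow>DU p. \<Sum>(g1,g2)\<leftarrow>Delta h4.
         n3 x1 * n1 (T x3) * (m h1 * n2 h2 * (\<sigma> g2 (T y) * \<sigma> g1 (T x2))))"
    by (intro sum2_cong pull2)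
  also have "\<dots> = (\<Sum>(x1,q)\<leftarrow>Delta x. \<Sum>(x2,x3)\<leftarrow>Delta q. \<Sum>(h',h4)\<leftarrow>Delta h. \<Sum>(h1,h2)\<leftarrow>Delta h'.
         \<Sum>(g1,g2)\<leftarrow>Delta h4. \<Sum>(p,n3)\<leftarrow>DU n. \<Sum>(n1,n2)\<leftarrow>DU p.
         n3 x1 * n1 (T x3) * (m h1 * n2 h2 * (\<sigma> g2 (T y) * \<sigma> g1 (T x2))))"
    by (intro sum2_cong pull2)
  also have "\<dots> = (\<Sum>(x1,q)\<leftarrow>Delta x. \<Sum>(x2,x3)\<leftarrow>Delta q. \<Sum>(h',h4)\<leftarrow>Delta h. \<Sum>(h1,h2)\<leftarrow>Delta h'.
         \<Sum>(g1,g2)\<leftarrow>Delta h4. m h1 * (\<sigma> g2 (T y) * \<sigma> g1 (T x2)) * n (mult (mult (T x3) h2) x1))"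
    by (intro sum2_cong col_leaf[OF n])
  also have "\<dots> = (\<Sum>(x1,q)\<leftarrow>Delta x. \<Sum>(h',h4)\<leftarrow>Delta h. \<Sum>(h1,h2)\<leftarrow>Delta h'.
         \<Sum>(g1,g2)\<leftarrow>Delta h4. \<Sum>(x2,x3)\<leftarrow>Delta q. m h1 * (\<sigma> g2 (T y) * \<sigma> g1 (T x2)) * n (mult (mult (T x3) h2) x1))"
    by (intro sum2_cong pull3[symmetric])
  also have "\<dots> = (\<Sum>(h',h4)\<leftarrow>Delta h. \<Sum>(h1,h2)\<leftarrow>Delta h'. \<Sum>(g1,g2)\<leftarrow>Delta h4. \<Sum>(x1,q)\<leftarrow>Delta x.
         \<Sum>(x2,x3)\<leftarrow>Delta q. m h1 * (\<sigma> g2 (T y) * \<sigma> g1 (T x2)) * n (mult (mult (T x3) h2) x1))"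
    by (rule pull3[symmetric])
  also have "\<dots> = (\<Sum>(a,e)\<leftarrow>Delta h. \<Sum>(f,d)\<leftarrow>Delta e. \<Sum>(b,c)\<leftarrow>Delta f. \<Sum>(x1,q)\<leftarrow>Delta x.
         \<Sum>(x2,x3)\<leftarrow>Delta q. m a * (\<sigma> d (T y) * \<sigma> c (T x2)) * n (mult (mult (T x3) b) x1))"
    by (rule R4) (intro linI L; (intro linI L)?)+
  also have "\<dots> = (\<Sum>(a,e)\<leftarrow>Delta h. \<Sum>(f,d)\<leftarrow>Delta e. \<Sum>(b,c)\<leftarrow>Delta f. m a * \<sigma> d (T y) * (\<sigma> b (T x) * n c))"
    by (intro sum2_cong S6_leaf[OF lnn])
  also have "\<dots> = (\<Sum>(h',h4)\<leftarrow>Delta h. \<Sum>(a,b)\<leftarrow>Delta h'. \<Sum>(c,d)\<leftarrow>Delta h4. m a * \<sigma> d (T y) * (\<sigma> b (T x) * n c))"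
    by (rule R4[symmetric]) (intro linI L lm lnn; (intro linI L lm lnn)?)+
  also have "\<dots> = cv (cv m (l (T x))) (cv n (l (T y))) h"
    by (simp only: cv_def' l_app mulc_sum2 cmul_sum2, intro sum2_cong, rule trans[OF sum2_swap], intro sum2_cong, simp only: mult_ac)
  finally show ?thesis .
qed

lemma COMUL:
  assumes m: "m \<in> U"
  shows "(\<Sum>(m1,m2)\<leftarrow>DU m. \<Sum>(x1,x2)\<leftarrow>Delta x. cv m2 (l (T x1)) a * cv m1 (l (T x2)) b) = cv m (l (T x)) (mult b a)"
proof -
  have lm: "lin sc m" by (rule U_lin[OF m])
  note L = lin_compH[OF lm]
  have "cv m (l (T x)) (mult b a) = (\<Sum>(b1,b2)\<leftarrow>Delta b. \<Sum>(a1,a2)\<leftarrow>Delta a. m (mult b1 a1) * \<sigma> (mult b2 a2) (T x))"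
    unfolding cv_def' l_app by (rule multD) (intro linI L)+
  also have "\<dots> = (\<Sum>(b1,b2)\<leftarrow>Delta b. \<Sum>(a1,a2)\<leftarrow>Delta a. \<Sum>(g1,g2)\<leftarrow>Delta (T x). m (mult b1 a1) * (\<sigma> b2 g1 * \<sigma> a2 g2))"
    by (simp only: sig_mult1 cmul_sum2)
  also have "\<dots> = (\<Sum>(g1,g2)\<leftarrow>Delta (T x). \<Sum>(b1,b2)\<leftarrow>Delta b. \<Sum>(a1,a2)\<leftarrow>Delta a. m (mult b1 a1) * (\<sigma> b2 g1 * \<sigma> a2 g2))"
    by (rule pull2)
  also have "\<dots> = (\<Sum>(x1,x2)\<leftarrow>Delta x. \<Sum>(b1,b2)\<leftarrow>Delta b. \<Sum>(a1,a2)\<leftarrow>Delta a. m (mult b1 a1) * (\<sigma> b2 (T x2) * \<sigma> a2 (T x1)))"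
    by (rule Delta_T) (intro linI L; (intro linI L)?)+
  finally have R: "cv m (l (T x)) (mult b a) = \<dots>" .
  have "(\<Sum>(m1,m2)\<leftarrow>DU m. \<Sum>(x1,x2)\<leftarrow>Delta x. cv m2 (l (T x1)) a * cv m1 (l (T x2)) b)
     = (\<Sum>(m1,m2)\<leftarrow>DU m. \<Sum>(x1,x2)\<leftarrow>Delta x. \<Sum>(a1,a2)\<leftarrow>Delta a. \<Sum>(b1,b2)\<leftarrow>Delta b.
          m2 a1 * \<sigma> a2 (T x1) * (m1 b1 * \<sigma> b2 (T x2)))"
    by (simp only: cv_def' l_app mulc_sum2 cmul_sum2, intro sum2_cong, rule sum2_swap)
  also have "\<dots> = (\<Sum>(x1,x2)\<leftarrow>Delta x. \<Sum>(a1,a2)\<leftarrow>Delta a. \<Sum>(b1,b2)\<leftarrow>Delta b. \<Sum>(m1,m2)\<leftarrow>DU m.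
          m2 a1 * \<sigma> a2 (T x1) * (m1 b1 * \<sigma> b2 (T x2)))"
    by (rule pull3[symmetric])
  also have "\<dots> = (\<Sum>(x1,x2)\<leftarrow>Delta x. \<Sum>(a1,a2)\<leftarrow>Delta a. \<Sum>(b1,b2)\<leftarrow>Delta b.
          m (mult b1 a1) * (\<sigma> b2 (T x2) * \<sigma> a2 (T x1)))"
  proof (intro sum2_cong)
    fix x1 x2 a1 a2 b1 b2
    have "(\<Sum>(m1,m2)\<leftarrow>DU m. m2 a1 * \<sigma> a2 (T x1) * (m1 b1 * \<sigma> b2 (T x2)))
        = (\<sigma> b2 (T x2) * \<sigma> a2 (T x1)) * (\<Sum>(m1,m2)\<leftarrow>DU m. m1 b1 * m2 a1)"
      by (simp only: cmul_sum2, intro sum2_cong, simp only: mult_ac)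
    also have "\<dots> = (\<sigma> b2 (T x2) * \<sigma> a2 (T x1)) * m (mult b1 a1)"
      using DeltaU_prop[OF m] by simp
    finally show "(\<Sum>(m1,m2)\<leftarrow>DU m. m2 a1 * \<sigma> a2 (T x1) * (m1 b1 * \<sigma> b2 (T x2)))
        = m (mult b1 a1) * (\<sigma> b2 (T x2) * \<sigma> a2 (T x1))" by (simp only: mult_ac)
  qed
  also have "\<dots> = (\<Sum>(x1,x2)\<leftarrow>Delta x. \<Sum>(b1,b2)\<leftarrow>Delta b. \<Sum>(a1,a2)\<leftarrow>Delta a.
          m (mult b1 a1) * (\<sigma> b2 (T x2) * \<sigma> a2 (T x1)))"
    by (intro sum2_cong sum2_swap)
  finally show ?thesis using R by simp
qed

lemma cv_suml2: "cv (\<lambda>h. \<Sum>(p,q)\<leftarrow>L. G p q h) g = (\<lambda>h. \<Sum>(p,q)\<leftarrow>L. cv (G p q) g h)"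
  by (rule ext) (simp only: cv_def' mulc_sum2 sum2_swap[where A="Delta _"])

end


context cqtXA begin

lemma piD_eq: "piD Delta S \<sigma> d = (\<lambda>h. \<Sum>(m,y)\<leftarrow>d. cv m (l (T y)) h)"
  by (simp add: piD_def T_def)

lemma piD_multD: "piD Delta S \<sigma> (multD mult Delta S U d d') h
  = (\<Sum>(m,x)\<leftarrow>d. \<Sum>(n,y)\<leftarrow>d'. \<Sum>(p,n3)\<leftarrow>DU n. \<Sum>(n1,n2)\<leftarrow>DU p. \<Sum>(x1,q)\<leftarrow>Delta x. \<Sum>(x2,x3)\<leftarrow>Delta q.
      cv (\<lambda>h. n3 x1 * n1 (T x3) * cv m n2 h) (l (T (mult x2 y))) h)"
  by (simp add: piD_def multD_def T_def sum_list_map_concat_pair)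

lemma piD_comultD: "(\<Sum>(g,g')\<leftarrow>[(piD Delta S \<sigma> [u], piD Delta S \<sigma> [v]). (u,v) \<leftarrow> comultD mult Delta U d]. g a * g' b)
  = (\<Sum>(m,x)\<leftarrow>d. \<Sum>(m1,m2)\<leftarrow>DU m. \<Sum>(x1,x2)\<leftarrow>Delta x. cv m2 (l (T x1)) a * cv m1 (l (T x2)) b)"
  by (simp add: piD_def comultD_def T_def sum_list_map_concat_pair)

end

theorem proposition1p5:
  fixes sc :: "'k::field \<Rightarrow> 'h::ab_group_add \<Rightarrow> 'h"
    and mult :: "'h \<Rightarrow> 'h \<Rightarrow> 'h" and one :: 'h
    and Delta :: "'h \<Rightarrow> ('h \<times> 'h) list" and eps :: "'h \<Rightarrow> 'k" and S :: "'h \<Rightarrow> 'h"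
    and \<sigma> :: "'h \<Rightarrow> 'h \<Rightarrow> 'k" and X A :: "'h set"
  assumes H: "hopf_algebra sc mult one Delta eps S"
    and sig: "cqt sc mult one Delta eps \<sigma>"
    and X: "sub_hopf sc mult one Delta S X"
    and A: "sub_hopf sc mult one Delta S A"
  defines "U \<equiv> HXA Delta \<sigma> X A"
  defines "Dreps \<equiv> {d. set d \<subseteq> U \<times> X}"
  shows
    \<comment> \<open>pi maps D(U^cop,X) into U\<close>
    "(\<forall>d\<in>Dreps. piD Delta S \<sigma> d \<in> U)
     \<comment> \<open>linearity\<close>
     \<and> (\<forall>d\<in>Dreps. \<forall>d'\<in>Dreps. \<forall>h. piD Delta S \<sigma> (d @ d') h = piD Delta S \<sigma> d h + piD Delta S \<sigma> d' h)
     \<and> (\<forall>d\<in>Dreps. \<forall>c h. piD Delta S \<sigma> (map (\<lambda>(m,x). ((\<lambda>t. c * m t), x)) d) h = c * piD Delta S \<sigma> d h)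
     \<comment> \<open>multiplicative and unital\<close>
     \<and> (\<forall>d\<in>Dreps. \<forall>d'\<in>Dreps.
          piD Delta S \<sigma> (multD mult Delta S U d d') = conv Delta (piD Delta S \<sigma> d) (piD Delta S \<sigma> d'))
     \<and> piD Delta S \<sigma> [(eps, one)] = eps
     \<comment> \<open>comultiplicative into U^cop: (pi (x) pi) Delta_D = Delta_{U^cop} pi\<close>
     \<and> (\<forall>d\<in>Dreps. evq [(piD Delta S \<sigma> [u], piD Delta S \<sigma> [v]). (u,v) \<leftarrow> comultD mult Delta U d]
                     (map (\<lambda>(g,g'). (g',g)) (DeltaU mult U (piD Delta S \<sigma> d))))
     \<comment> \<open>counital\<close>
     \<and> (\<forall>d\<in>Dreps. piD Delta S \<sigma> d one = counitD one eps d)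
     \<comment> \<open>pi o i = Id\<close>
     \<and> (\<forall>\<phi>\<in>U. piD Delta S \<sigma> [(\<phi>, one)] = \<phi>)"
proof -
  interpret cqtXA sc mult one Delta eps S \<sigma> X A
    using H sig X A by (simp add: cqtXA_def cqtL_def hopfL_def cqtXA_axioms_def cqtL_axioms_def)
  have P1: "\<forall>d\<in>{d. set d \<subseteq> HXA Delta \<sigma> X A \<times> X}. piD Delta S \<sigma> d \<in> HXA Delta \<sigma> X A"
  proof
    fix d assume d: "d \<in> {d. set d \<subseteq> HXA Delta \<sigma> X A \<times> X}"
    show "piD Delta S \<sigma> d \<in> HXA Delta \<sigma> X A"
      unfolding piD_eq
    proof (rule U_sum2)
      fix m y assume "(m,y) \<in> set d"
      then have "m \<in> HXA Delta \<sigma> X A" "y \<in> X" using d by auto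
      then show "cv m (l (T y)) \<in> HXA Delta \<sigma> X A" by (intro U_cvl subh_T[OF X])
    qed
  qed
  have P2: "\<forall>d\<in>{d. set d \<subseteq> HXA Delta \<sigma> X A \<times> X}. \<forall>d'\<in>{d. set d \<subseteq> HXA Delta \<sigma> X A \<times> X}. \<forall>h.
      piD Delta S \<sigma> (d @ d') h = piD Delta S \<sigma> d h + piD Delta S \<sigma> d' h"
    by (simp add: piD_def)
  have P3: "\<forall>d\<in>{d. set d \<subseteq> HXA Delta \<sigma> X A \<times> X}. \<forall>c h.
      piD Delta S \<sigma> (map (\<lambda>(m,x). ((\<lambda>t. c * m t), x)) d) h = c * piD Delta S \<sigma> d h"
    by (simp add: piD_eq cv_cmul cmul_sum2)
  have P4: "\<forall>d\<in>{d. set d \<subseteq> HXA Delta \<sigma> X A \<times> X}. \<forall>d'\<in>{d. set d \<subseteq> HXA Delta \<sigma> X A \<times> X}.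
      piD Delta S \<sigma> (multD mult Delta S (HXA Delta \<sigma> X A) d d') = conv Delta (piD Delta S \<sigma> d) (piD Delta S \<sigma> d')"
  proof (intro ballI ext)
    fix d d' h
    assume d: "d \<in> {d. set d \<subseteq> HXA Delta \<sigma> X A \<times> X}" and d': "d' \<in> {d. set d \<subseteq> HXA Delta \<sigma> X A \<times> X}"
    have "conv Delta (piD Delta S \<sigma> d) (piD Delta S \<sigma> d') h
        = (\<Sum>(m,x)\<leftarrow>d. \<Sum>(n,y)\<leftarrow>d'. cv (cv m (l (T x))) (cv n (l (T y))) h)"
      by (simp only: piD_eq cv_suml2 cv_sumr2)
    also have "\<dots> = piD Delta S \<sigma> (multD mult Delta S (HXA Delta \<sigma> X A) d d') h"
      unfolding piD_multD
    proof (intro sum2_cong)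
      fix m x n y assume "(m,x) \<in> set d" "(n,y) \<in> set d'"
      then have "m \<in> HXA Delta \<sigma> X A" "n \<in> HXA Delta \<sigma> X A" using d d' by auto
      then show "cv (cv m (l (T x))) (cv n (l (T y))) h
          = (\<Sum>(p,n3)\<leftarrow>DU n. \<Sum>(n1,n2)\<leftarrow>DU p. \<Sum>(x1,q)\<leftarrow>Delta x. \<Sum>(x2,x3)\<leftarrow>Delta q.
              cv (\<lambda>h. n3 x1 * n1 (T x3) * cv m n2 h) (l (T (mult x2 y))) h)"
        by (simp only: KEY)
    qed
    finally show "piD Delta S \<sigma> (multD mult Delta S (HXA Delta \<sigma> X A) d d') h = conv Delta (piD Delta S \<sigma> d) (piD Delta S \<sigma> d') h"
      by simp
  qed
  have P5: "piD Delta S \<sigma> [(eps, one)] = eps"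
    by (simp add: piD_eq l_one cv_eps_l lin_eps)
  have P6: "\<forall>d\<in>{d. set d \<subseteq> HXA Delta \<sigma> X A \<times> X}.
      evq [(piD Delta S \<sigma> [u], piD Delta S \<sigma> [v]). (u,v) \<leftarrow> comultD mult Delta (HXA Delta \<sigma> X A) d]
          (map (\<lambda>(g,g'). (g',g)) (DeltaU mult (HXA Delta \<sigma> X A) (piD Delta S \<sigma> d)))"
  proof
    fix d assume d: "d \<in> {d. set d \<subseteq> HXA Delta \<sigma> X A \<times> X}"
    have pu: "piD Delta S \<sigma> d \<in> HXA Delta \<sigma> X A" using P1 d by blast
    show "evq [(piD Delta S \<sigma> [u], piD Delta S \<sigma> [v]). (u,v) \<leftarrow> comultD mult Delta (HXA Delta \<sigma> X A) d]
          (map (\<lambda>(g,g'). (g',g)) (DeltaU mult (HXA Delta \<sigma> X A) (piD Delta S \<sigma> d)))"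
      unfolding evq_def
    proof (intro allI)
      fix a b
      have R: "(\<Sum>(g,g')\<leftarrow>map (\<lambda>(g,g'). (g',g)) (DU (piD Delta S \<sigma> d)). g a * g' b) = piD Delta S \<sigma> d (mult b a)"
      proof -
        have "(\<Sum>(g,g')\<leftarrow>map (\<lambda>(g,g'). (g',g)) (DU (piD Delta S \<sigma> d)). g a * g' b)
            = (\<Sum>(g,g')\<leftarrow>DU (piD Delta S \<sigma> d). g b * g' a)"
          by (simp add: mult.commute)
        also have "\<dots> = piD Delta S \<sigma> d (mult b a)" using DeltaU_prop[OF pu] by simp
        finally show ?thesis .
      qed
      have "(\<Sum>(g,g')\<leftarrow>[(piD Delta S \<sigma> [u], piD Delta S \<sigma> [v]). (u,v) \<leftarrow> comultD mult Delta (HXA Delta \<sigma> X A) d]. g a * g' b)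
          = (\<Sum>(m,x)\<leftarrow>d. \<Sum>(m1,m2)\<leftarrow>DU m. \<Sum>(x1,x2)\<leftarrow>Delta x. cv m2 (l (T x1)) a * cv m1 (l (T x2)) b)"
        by (rule piD_comultD)
      also have "\<dots> = (\<Sum>(m,x)\<leftarrow>d. cv m (l (T x)) (mult b a))"
      proof (rule sum2_cong)
        fix m x assume "(m,x) \<in> set d"
        then have "m \<in> HXA Delta \<sigma> X A" using d by auto
        then show "(\<Sum>(m1,m2)\<leftarrow>DU m. \<Sum>(x1,x2)\<leftarrow>Delta x. cv m2 (l (T x1)) a * cv m1 (l (T x2)) b) = cv m (l (T x)) (mult b a)"
          by (rule COMUL)
      qed
      also have "\<dots> = piD Delta S \<sigma> d (mult b a)" by (simp add: piD_eq)
      finally show "sum_list [g a * g' b. (g,g') \<leftarrow> [(piD Delta S \<sigma> [u], piD Delta S \<sigma> [v]). (u,v) \<leftarrow> comultD mult Delta (HXA Delta \<sigma> X A) d]]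
          = sum_list [g a * g' b. (g,g') \<leftarrow> map (\<lambda>(g,g'). (g',g)) (DeltaU mult (HXA Delta \<sigma> X A) (piD Delta S \<sigma> d))]"
        using R by simp
    qed
  qed
  have P7: "\<forall>d\<in>{d. set d \<subseteq> HXA Delta \<sigma> X A \<times> X}. piD Delta S \<sigma> d one = counitD one eps d"
  proof
    fix d assume d: "d \<in> {d. set d \<subseteq> HXA Delta \<sigma> X A \<times> X}"
    have "piD Delta S \<sigma> d one = (\<Sum>(m,y)\<leftarrow>d. cv m (l (T y)) one)" by (simp add: piD_eq)
    also have "\<dots> = (\<Sum>(m,y)\<leftarrow>d. m one * eps y)"
    proof (rule sum2_cong)
      fix m y assume "(m,y) \<in> set d"
      then have "m \<in> HXA Delta \<sigma> X A" using d by auto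
      then have lm: "lin sc m" by (rule U_lin)
      have "cv m (l (T y)) one = m one * \<sigma> one (T y)"
        unfolding cv_def' l_app by (rule oneD) (intro linI lin_compH[OF lm])+
      then show "cv m (l (T y)) one = m one * eps y" by (simp add: eps_T)
    qed
    also have "\<dots> = counitD one eps d" by (simp add: counitD_def)
    finally show "piD Delta S \<sigma> d one = counitD one eps d" .
  qed
  have P8: "\<forall>\<phi>\<in>HXA Delta \<sigma> X A. piD Delta S \<sigma> [(\<phi>, one)] = \<phi>"
  proof
    fix \<phi> assume "\<phi> \<in> HXA Delta \<sigma> X A"
    then have "lin sc \<phi>" by (rule U_lin)
    then show "piD Delta S \<sigma> [(\<phi>, one)] = \<phi>" by (simp add: piD_eq l_one cv_eps_r)
  qed
  show ?thesis unfolding U_def Dreps_def using P1 P2 P3 P4 P5 P6 P7 P8 by blast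
qed



end
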